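(* Under Assumptions 1, 2, 3 and 5, with the SMD iterates, stepsize, $g^N$, $K_1(X)$ and $K_2(X)$ as in the context, define $a(\Theta,N)=\Theta M_1/\sqrt N$, $b(\Theta,X,N)=(K_1(X)+\Theta(K_2(X)-M_1))/\sqrt N$, $\mathrm{Up}_1(\Theta_1,N)=g^N+a(\Theta_1,N)$ and $\mathrm{Low}_1(\Theta_2,\Theta_3,N)=g^N-b(\Theta_2,X,N)-a(\Theta_3,N)$. Then for all $\Theta_1,\Theta_2,\Theta_3>0$, $$\mathbb P\big(f(x_* )\in[\mathrm{Low}_1(\Theta_2,\Theta_3,N),\mathrm{Up}_1(\Theta_1,N)]\big)\ge1-e^{-\Theta_1^2/4}-e^{1-\Theta_2^2}-e^{-\Theta_2^2/4}-e^{-\Theta_3^2/4}.$$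
   Context: Proximal setup: $E$ Euclidean space, norm $\|\cdot\|$, dual norm $\|\cdot\|_*$; $X$ nonempty closed bounded convex; $\omega$ convex continuous on $X$, continuous subgradient selection $\omega'$ on $X^o$, strongly convex modulus $\mu(\omega)>0$; $x_\omega=\arg\min_X\omega$; $D_{\omega,X}=\sqrt{2[\max_X\omega-\min_X\omega]}$; $\mathrm{Prox}_x(\zeta)=\arg\min_{y\in X}\{\omega(y)+y^\top(\zeta-\omega'(x))\}$. Problem $f(x)=\mathbb E[g(x,\xi)]$, $g$ Borel convex in $x$, $f$ convex Lipschitz on $X$ with minimizer $x_*$; i.i.d. $\xi_1,\xi_2,\dots$; oracle returns $g(x,\xi_t)$ and measurable $G(x,\xi_t)\in\partial_xg(x,\xi_t)$; $f'=\mathbb EG$, $\delta=g-f$, $\Delta=G-f'$. SMD: $x_1=x_\omega$, $x_{t+1}=\mathrm{Prox}_{x_t}(\gamma G(x_t,\xi_t))$, $t=1,\dots,N-1$, $\gamma=D_{\omega,X}\sqrt{\mu(\omega)}/(\sqrt{2(M_2^2+L^2)}\sqrt N)$; $g^N=\frac1N\sum_{\tau=1}^Ng(x_\tau,\xi_\tau)$. $K_1(X)=\frac{D_{\omega,X}(M_2^2+2L^2)}{\sqrt{2(M_2^2+L^2)\mu(\omega)}}$, $K_2(X)=\frac{D_{\omega,X}M_2^2}{\sqrt{2(M_2^2+L^2)\mu(\omega)}}+\frac{2D_{\omega,X}M_2}{\sqrt{\mu(\omega)}}+M_1$. Assumption 1: $\|f'(x)\|_*\le L$ on $X$. Assumption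 2: $f=\mathbb Eg$, $\mathbb EG(x,\xi)\in\partial f(x)$. Assumption 3: $\mathbb E\delta^2\le M_1^2$, $\mathbb E\|\Delta\|_*^2\le M_2^2$ on $X$. Assumption 5: $\mathbb E\exp\{\delta^2/M_1^2\}\le e$ and $\|\Delta(x,\xi)\|_*\le M_2$ a.s. on $X$. *)

theory Defs
  imports "HOL-Probability.Probability"
begin

definition is_norm :: "('a::euclidean_space \<Rightarrow> real) \<Rightarrow> bool" where
  "is_norm nrm \<longleftrightarrow> (\<forall>x y. nrm (x + y) \<le> nrm x + nrm y)
     \<and> (\<forall>c x. nrm (c *\<^sub>R x) = \<bar>c\<bar> * nrm x) \<and> (\<forall>x. nrm x = 0 \<longleftrightarrow> x = 0)"

text \<open>Dual norm (E is identified with its dual via the inner product).\<close>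
definition dual_norm :: "('a::euclidean_space \<Rightarrow> real) \<Rightarrow> 'a \<Rightarrow> real" where
  "dual_norm nrm y = Sup {y \<bullet> x | x. nrm x \<le> 1}"

text \<open>X^o: points of X where the subdifferential of omega (extended by +infinity off X) is nonempty.\<close>
definition dom_subdiff :: "('a::euclidean_space \<Rightarrow> real) \<Rightarrow> 'a set \<Rightarrow> 'a set" where
  "dom_subdiff \<omega> X = {x \<in> X. \<exists>v. \<forall>y\<in>X. \<omega> y \<ge> \<omega> x + v \<bullet> (y - x)}"

definition prox :: "('a::euclidean_space \<Rightarrow> real) \<Rightarrow> ('a \<Rightarrow> 'a) \<Rightarrow> 'a set \<Rightarrow> 'a \<Rightarrow> 'a \<Rightarrow> 'a" where
  "prox \<omega> \<omega>' X x \<zeta> = (THE y. y \<in> X \<and>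
      (\<forall>z\<in>X. \<omega> y + y \<bullet> (\<zeta> - \<omega>' x) \<le> \<omega> z + z \<bullet> (\<zeta> - \<omega>' x)))"

definition prox_center :: "('a::euclidean_space \<Rightarrow> real) \<Rightarrow> 'a set \<Rightarrow> 'a" where
  "prox_center \<omega> X = (THE y. y \<in> X \<and> (\<forall>z\<in>X. \<omega> y \<le> \<omega> z))"

definition D_omega :: "('a::euclidean_space \<Rightarrow> real) \<Rightarrow> 'a set \<Rightarrow> real" where
  "D_omega \<omega> X = sqrt (2 * (Sup (\<omega> ` X) - Inf (\<omega> ` X)))"

text \<open>SMD iterates: smd_iter ... t is x_t for t \<ge> 1 (index 0 is a dummy copy of x_1):
  x_1 = x1, x_{t+1} = Prox_{x_t}(gamma G(x_t, xi_t)).\<close>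
primrec smd_iter :: "('a \<Rightarrow> 'a \<Rightarrow> 'a) \<Rightarrow> 'a \<Rightarrow> real \<Rightarrow> ('a \<Rightarrow> 's \<Rightarrow> 'a::real_vector)
    \<Rightarrow> (nat \<Rightarrow> 's) \<Rightarrow> nat \<Rightarrow> 'a" where
  "smd_iter P x1 \<gamma> G \<xi>s 0 = x1"
| "smd_iter P x1 \<gamma> G \<xi>s (Suc t) =
     (if t = 0 then x1
      else P (smd_iter P x1 \<gamma> G \<xi>s t) (\<gamma> *\<^sub>R G (smd_iter P x1 \<gamma> G \<xi>s t) (\<xi>s t)))"

definition smd_stepsize :: "real \<Rightarrow> real \<Rightarrow> real \<Rightarrow> real \<Rightarrow> nat \<Rightarrow> real" where
  "smd_stepsize D \<mu> M2 L N' = D * sqrt \<mu> / (sqrt (2 * (M2\<^sup>2 + L\<^sup>2)) * sqrt (real N'))"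

definition K1 :: "real \<Rightarrow> real \<Rightarrow> real \<Rightarrow> real \<Rightarrow> real" where
  "K1 D \<mu> M2 L = D * (M2\<^sup>2 + 2 * L\<^sup>2) / sqrt (2 * (M2\<^sup>2 + L\<^sup>2) * \<mu>)"

definition K2 :: "real \<Rightarrow> real \<Rightarrow> real \<Rightarrow> real \<Rightarrow> real \<Rightarrow> real" where
  "K2 D \<mu> M1 M2 L = D * M2\<^sup>2 / sqrt (2 * (M2\<^sup>2 + L\<^sup>2) * \<mu>) + 2 * D * M2 / sqrt \<mu> + M1"

definition a_bound :: "real \<Rightarrow> real \<Rightarrow> nat \<Rightarrow> real" where
  "a_bound M1 \<Theta> N' = \<Theta> * M1 / sqrt (real N')"

definition b_bound :: "real \<Rightarrow> real \<Rightarrow> real \<Rightarrow> real \<Rightarrow> nat \<Rightarrow> real" where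
  "b_bound k1 k2 M1 \<Theta> N' = (k1 + \<Theta> * (k2 - M1)) / sqrt (real N')"

end

theory Submission
  imports Defs
begin

lemma isn_zero: "is_norm nrm \<Longrightarrow> nrm 0 = 0"
  unfolding is_norm_def by auto
lemma isn_scale: "is_norm nrm \<Longrightarrow> nrm (c *\<^sub>R x) = \<bar>c\<bar> * nrm x"
  unfolding is_norm_def by auto
lemma isn_tri: "is_norm nrm \<Longrightarrow> nrm (x + y) \<le> nrm x + nrm y"
  unfolding is_norm_def by auto
lemma isn_minus: "is_norm nrm \<Longrightarrow> nrm (- x) = nrm x"
  using isn_scale[of nrm "-1" x] by simp
lemma isn_nonneg: "is_norm nrm \<Longrightarrow> nrm x \<ge> 0"
proof -
  assume n: "is_norm nrm"
  have "nrm (x + - x) \<le> nrm x + nrm (- x)" by (rule isn_tri[OF n])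
  thus ?thesis using isn_zero[OF n] isn_minus[OF n, of x] by simp
qed
lemma isn_eq0: "is_norm nrm \<Longrightarrow> nrm x = 0 \<longleftrightarrow> x = 0"
  unfolding is_norm_def by auto
lemma isn_commute: "is_norm nrm \<Longrightarrow> nrm (x - y) = nrm (y - x)"
  using isn_minus[of nrm "x - y"] by simp
lemma isn_diff_tri: "is_norm nrm \<Longrightarrow> nrm (x - z) \<le> nrm (x - y) + nrm (y - z)"
  using isn_tri[of nrm "x - y" "y - z"] by simp

lemma isn_sum: "is_norm nrm \<Longrightarrow> nrm (sum f A) \<le> (\<Sum>i\<in>A. nrm (f i))"
proof (induction A rule: infinite_finite_induct)
  case (infinite A) then show ?case by (simp add: isn_zero)
next
  case empty then show ?case by (simp add: isn_zero)
next
  case (insert x F)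
  then show ?case using isn_tri[OF insert.prems, of "f x" "sum f F"] by simp
qed

lemma isn_upper:
  fixes nrm :: "'a::euclidean_space \<Rightarrow> real"
  assumes n: "is_norm nrm"
  shows "\<exists>C>0. \<forall>x. nrm x \<le> C * norm x"
proof -
  define C where "C = 1 + (\<Sum>b\<in>Basis. nrm b)"
  have Cp: "C > 0" unfolding C_def using isn_nonneg[OF n] by (simp add: add_pos_nonneg sum_nonneg)
  have "nrm x \<le> C * norm x" for x
  proof -
    have "nrm x = nrm (\<Sum>b\<in>Basis. (x \<bullet> b) *\<^sub>R b)" by (simp add: euclidean_representation)
    also have "\<dots> \<le> (\<Sum>b\<in>Basis. nrm ((x \<bullet> b) *\<^sub>R b))" by (rule isn_sum[OF n])
    also have "\<dots> = (\<Sum>b\<in>Basis. \<bar>x \<bullet> b\<bar> * nrm b)" by (simp add: isn_scale[OF n])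
    also have "\<dots> \<le> (\<Sum>b\<in>Basis. norm x * nrm b)"
      by (intro sum_mono mult_right_mono Basis_le_norm isn_nonneg[OF n]) auto
    also have "\<dots> = norm x * (\<Sum>b\<in>Basis. nrm b)" by (simp add: sum_distrib_left)
    also have "\<dots> \<le> C * norm x" unfolding C_def by (simp add: algebra_simps)
    finally show ?thesis .
  qed
  thus ?thesis using Cp by blast
qed

lemma isn_cont:
  fixes nrm :: "'a::euclidean_space \<Rightarrow> real"
  assumes n: "is_norm nrm"
  shows "continuous_on UNIV nrm"
proof -
  obtain C where C: "C > 0" "\<forall>x. nrm x \<le> C * norm x" using isn_upper[OF n] by blast
  have "\<bar>nrm x - nrm y\<bar> \<le> C * dist x y" for x y
  proof -
    have "nrm x \<le> nrm (x - y) + nrm y" using isn_tri[OF n, of "x - y" y] by simp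
    moreover have "nrm y \<le> nrm (y - x) + nrm x" using isn_tri[OF n, of "y - x" x] by simp
    moreover have "nrm (x - y) \<le> C * dist x y" "nrm (y - x) \<le> C * dist x y"
      using C(2)[rule_format, of "x - y"] C(2)[rule_format, of "y - x"] by (auto simp: dist_norm norm_minus_commute)
    ultimately show ?thesis by linarith
  qed
  hence "C-lipschitz_on UNIV nrm" using C(1) by (intro lipschitz_onI) (auto simp: dist_real_def)
  thus ?thesis by (rule lipschitz_on_continuous_on)
qed

lemma isn_lower:
  fixes nrm :: "'a::euclidean_space \<Rightarrow> real"
  assumes n: "is_norm nrm"
  shows "\<exists>c>0. \<forall>x. c * norm x \<le> nrm x"
proof -
  have cpt: "compact (sphere (0::'a) 1)" by simp
  have ne: "sphere (0::'a) 1 \<noteq> {}" by simp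
  obtain m where m: "m \<in> sphere (0::'a) 1" "\<forall>y\<in>sphere 0 1. nrm m \<le> nrm y"
    using continuous_attains_inf[OF cpt ne continuous_on_subset[OF isn_cont[OF n]]] by blast
  have m0: "m \<noteq> 0" using m(1) by auto
  have mp: "nrm m > 0" using isn_nonneg[OF n, of m] isn_eq0[OF n, of m] m0 by linarith
  have "nrm m * norm x \<le> nrm x" for x
  proof (cases "x = 0")
    case True then show ?thesis by (simp add: isn_zero[OF n])
  next
    case False
    have "(1 / norm x) *\<^sub>R x \<in> sphere 0 1" using False by (simp add: norm_scaleR)
    hence "nrm m \<le> nrm ((1 / norm x) *\<^sub>R x)" using m(2) by blast
    also have "\<dots> = nrm x / norm x" by (simp add: isn_scale[OF n])
    finally show ?thesis using False by (simp add: field_simps)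
  qed
  thus ?thesis using mp by blast
qed

lemma dual_bdd:
  fixes nrm :: "'a::euclidean_space \<Rightarrow> real"
  assumes n: "is_norm nrm"
  obtains c where "c > 0" "\<And>v. \<forall>z\<in>{v \<bullet> x | x. nrm x \<le> 1}. z \<le> norm v / c"
proof -
  obtain c where c: "c > 0" "\<forall>x. c * norm x \<le> nrm x" using isn_lower[OF n] by blast
  have "z \<le> norm v / c" if "z \<in> {v \<bullet> x | x. nrm x \<le> 1}" for v z
  proof -
    obtain x where x: "z = v \<bullet> x" "nrm x \<le> 1" using \<open>z \<in> _\<close> by blast
    have "norm x \<le> 1 / c" using c x(2) by (smt (verit) mult.commute pos_le_divide_eq)
    have "z \<le> norm v * norm x" using x(1) norm_cauchy_schwarz by simp
    also have "\<dots> \<le> norm v * (1 / c)" using \<open>norm x \<le> 1 / c\<close> by (rule mult_left_mono) auto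
    finally show ?thesis by simp
  qed
  thus ?thesis using that c(1) by blast
qed

lemma dual_ub:
  fixes nrm :: "'a::euclidean_space \<Rightarrow> real"
  assumes n: "is_norm nrm"
  shows "v \<bullet> x \<le> dual_norm nrm v * nrm x"
proof (cases "x = 0")
  case True then show ?thesis by (simp add: isn_zero[OF n])
next
  case False
  obtain c where c: "c > 0" "\<And>v. \<forall>z\<in>{v \<bullet> x | x. nrm x \<le> 1}. z \<le> norm v / c" using dual_bdd[OF n] by blast
  have np: "nrm x > 0" using isn_nonneg[OF n, of x] isn_eq0[OF n, of x] False by linarith
  have "v \<bullet> ((1 / nrm x) *\<^sub>R x) \<in> {v \<bullet> x | x. nrm x \<le> 1}"
    using np by (intro CollectI exI[of _ "(1 / nrm x) *\<^sub>R x"]) (simp add: isn_scale[OF n])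
  hence "v \<bullet> ((1 / nrm x) *\<^sub>R x) \<le> dual_norm nrm v"
    unfolding dual_norm_def using c(2) by (intro cSup_upper) (auto simp: bdd_above_def)
  thus ?thesis using np by (simp add: field_simps)
qed

lemma dual_ne: "{v \<bullet> x | x. nrm x \<le> 1} \<noteq> {}" if "is_norm nrm" for nrm :: "'a::euclidean_space \<Rightarrow> real"
proof -
  have "v \<bullet> 0 \<in> {v \<bullet> x | x. nrm x \<le> 1}" by (intro CollectI exI[of _ 0]) (simp add: isn_zero[OF that])
  thus ?thesis by blast
qed

lemma dual_nonneg:
  fixes nrm :: "'a::euclidean_space \<Rightarrow> real"
  assumes n: "is_norm nrm" shows "dual_norm nrm v \<ge> 0"
proof -
  obtain c where c: "c > 0" "\<And>v. \<forall>z\<in>{v \<bullet> x | x. nrm x \<le> 1}. z \<le> norm v / c" using dual_bdd[OF n] by blast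
  have "v \<bullet> 0 \<in> {v \<bullet> x | x. nrm x \<le> 1}" by (intro CollectI exI[of _ 0]) (simp add: isn_zero[OF n])
  hence "v \<bullet> 0 \<le> dual_norm nrm v" unfolding dual_norm_def using c(2) by (intro cSup_upper) (auto simp: bdd_above_def)
  thus ?thesis by simp
qed

lemma dual_le_norm:
  fixes nrm :: "'a::euclidean_space \<Rightarrow> real"
  assumes n: "is_norm nrm"
  obtains c where "c > 0" "\<And>v. dual_norm nrm v \<le> norm v / c"
proof -
  obtain c where c: "c > 0" "\<And>v. \<forall>z\<in>{v \<bullet> x | x. nrm x \<le> 1}. z \<le> norm v / c" using dual_bdd[OF n] by blast
  have "dual_norm nrm v \<le> norm v / c" for v
    unfolding dual_norm_def using c(2) dual_ne[OF n] by (intro cSup_least) auto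
  thus ?thesis using that c(1) by blast
qed

lemma dual_tri:
  fixes nrm :: "'a::euclidean_space \<Rightarrow> real"
  assumes n: "is_norm nrm"
  shows "dual_norm nrm (u + v) \<le> dual_norm nrm u + dual_norm nrm v"
  unfolding dual_norm_def[of nrm "u+v"]
proof (rule cSup_least[OF dual_ne[OF n]])
  fix z assume "z \<in> {(u + v) \<bullet> x | x. nrm x \<le> 1}"
  then obtain x where x: "z = (u + v) \<bullet> x" "nrm x \<le> 1" by blast
  have "u \<bullet> x \<le> dual_norm nrm u * nrm x" "v \<bullet> x \<le> dual_norm nrm v * nrm x"
    using dual_ub[OF n] by auto
  moreover have "dual_norm nrm u * nrm x \<le> dual_norm nrm u" "dual_norm nrm v * nrm x \<le> dual_norm nrm v"
    using x(2) dual_nonneg[OF n] isn_nonneg[OF n] by (auto intro: mult_left_le)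
  ultimately show "z \<le> dual_norm nrm u + dual_norm nrm v" using x(1) by (simp add: inner_add_left)
qed

lemma dual_minus:
  fixes nrm :: "'a::euclidean_space \<Rightarrow> real"
  assumes n: "is_norm nrm"
  shows "dual_norm nrm (- v) = dual_norm nrm v"
proof -
  have "{(- v) \<bullet> x | x. nrm x \<le> 1} = {v \<bullet> x | x. nrm x \<le> 1}"
  proof safe
    fix x assume "nrm x \<le> 1" thus "\<exists>y. (- v) \<bullet> x = v \<bullet> y \<and> nrm y \<le> 1"
      by (intro exI[of _ "-x"]) (auto simp: isn_minus[OF n])
  next
    fix x assume "nrm x \<le> 1" thus "\<exists>y. v \<bullet> x = (- v) \<bullet> y \<and> nrm y \<le> 1"
      by (intro exI[of _ "-x"]) (auto simp: isn_minus[OF n])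
  qed
  thus ?thesis unfolding dual_norm_def by simp
qed

lemma dual_abs:
  fixes nrm :: "'a::euclidean_space \<Rightarrow> real"
  assumes n: "is_norm nrm"
  shows "\<bar>v \<bullet> x\<bar> \<le> dual_norm nrm v * nrm x"
  using dual_ub[OF n, of v x] dual_ub[OF n, of "-v" x] dual_minus[OF n, of v] by auto

lemma dual_cont:
  fixes nrm :: "'a::euclidean_space \<Rightarrow> real"
  assumes n: "is_norm nrm"
  shows "continuous_on UNIV (dual_norm nrm)"
proof -
  obtain c where c: "c > 0" "\<And>v. dual_norm nrm v \<le> norm v / c" using dual_le_norm[OF n] by blast
  have "\<bar>dual_norm nrm u - dual_norm nrm v\<bar> \<le> (1/c) * dist u v" for u v
  proof -
    have "dual_norm nrm u \<le> dual_norm nrm (u - v) + dual_norm nrm v" using dual_tri[OF n, of "u - v" v] by simp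
    moreover have "dual_norm nrm v \<le> dual_norm nrm (v - u) + dual_norm nrm u" using dual_tri[OF n, of "v - u" u] by simp
    moreover have "dual_norm nrm (u - v) \<le> (1/c) * dist u v" "dual_norm nrm (v - u) \<le> (1/c) * dist u v"
      using c(2)[of "u - v"] c(2)[of "v - u"] by (auto simp: dist_norm norm_minus_commute)
    ultimately show ?thesis by linarith
  qed
  hence "(1/c)-lipschitz_on UNIV (dual_norm nrm)" using c(1) by (intro lipschitz_onI) (auto simp: dist_real_def)
  thus ?thesis by (rule lipschitz_on_continuous_on)
qed


lemma measurable_cont_comp:
  assumes "continuous_on D f" "h \<in> borel_measurable N" "\<forall>b\<in>space N. h b \<in> D"
  shows "(\<lambda>b. f (h b)) \<in> borel_measurable N"
proof (rule borel_measurableI)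
  fix U :: "'b set" assume U: "open U"
  obtain V where V: "open V" "V \<inter> D = f -` U \<inter> D"
    using assms(1) U unfolding continuous_on_open_invariant by blast
  have "(\<lambda>b. f (h b)) -` U \<inter> space N = h -` V \<inter> space N"
    using V(2) assms(3) by blast
  moreover have "h -` V \<inter> space N \<in> sets N"
    using assms(2) V(1) by (simp add: borel_measurable_vimage_open)
  ultimately show "(\<lambda>b. f (h b)) -` U \<inter> space N \<in> sets N" by simp
qed

lemma le_limit_aux:
  fixes A B C :: real
  assumes "C \<ge> 0" "\<And>t. 0 < t \<Longrightarrow> t \<le> 1 \<Longrightarrow> A \<ge> B - t * C"
  shows "A \<ge> B"
proof (rule ccontr)
  assume "\<not> A \<ge> B"
  hence ab: "B - A > 0" by simp
  show False
  proof (cases "C = 0")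
    case True then show False using assms(2)[of 1] ab by simp
  next
    case False
    hence Cp: "C > 0" using assms(1) by simp
    define t where "t = min 1 ((B - A) / (2 * C))"
    have t: "0 < t" "t \<le> 1" using ab Cp unfolding t_def by auto
    have "t * C \<le> (B - A) / (2 * C) * C" using Cp unfolding t_def by (intro mult_right_mono) auto
    also have "\<dots> = (B - A) / 2" using Cp by simp
    finally have tc: "t * C \<le> (B - A) / 2" .
    have "B - t * C \<le> A" using assms(2)[OF t] by simp
    thus False using tc ab unfolding diff_divide_distrib by linarith
  qed
qed

locale smd_cvx =
  fixes nrm :: "'a::euclidean_space \<Rightarrow> real" and X :: "'a set"
    and \<omega> :: "'a \<Rightarrow> real" and \<omega>' :: "'a \<Rightarrow> 'a" and \<mu> :: real
  assumes n: "is_norm nrm"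
    and Xne: "X \<noteq> {}" and Xc: "compact X" and Xcv: "convex X"
    and ocv: "convex_on X \<omega>" and oc: "continuous_on X \<omega>"
    and osub: "\<forall>x\<in>dom_subdiff \<omega> X. \<forall>y\<in>X. \<omega> y \<ge> \<omega> x + \<omega>' x \<bullet> (y - x)"
    and ocont: "continuous_on (dom_subdiff \<omega> X) \<omega>'"
    and mu: "\<mu> > 0"
    and sc: "\<forall>x\<in>dom_subdiff \<omega> X. \<forall>x'\<in>dom_subdiff \<omega> X.
           (x' - x) \<bullet> (\<omega>' x' - \<omega>' x) \<ge> \<mu> * (nrm (x' - x))\<^sup>2"

context smd_cvx
begin

definition subgr :: "'a \<Rightarrow> 'a \<Rightarrow> bool" where
  "subgr x v \<longleftrightarrow> x \<in> X \<and> (\<forall>y\<in>X. \<omega> y \<ge> \<omega> x + v \<bullet> (y - x))"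

lemma subgr_dom: "subgr x v \<Longrightarrow> x \<in> dom_subdiff \<omega> X"
  unfolding subgr_def dom_subdiff_def by blast

lemma dom_X: "x \<in> dom_subdiff \<omega> X \<Longrightarrow> x \<in> X"
  unfolding dom_subdiff_def by blast

lemma dom_subgr: "x \<in> dom_subdiff \<omega> X \<Longrightarrow> subgr x (\<omega>' x)"
  unfolding subgr_def using osub dom_X by blast

lemma om_bdd: "\<exists>B. \<forall>x\<in>X. \<bar>\<omega> x\<bar> \<le> B"
proof -
  have "compact (\<omega> ` X)" by (rule compact_continuous_image[OF oc Xc])
  then obtain B where "\<forall>y\<in>\<omega> ` X. norm y \<le> B" using compact_imp_bounded bounded_iff by blast
  thus ?thesis by auto
qed

lemma min_exists: "\<exists>y\<in>X. \<forall>z\<in>X. \<omega> y + y \<bullet> c \<le> \<omega> z + z \<bullet> c"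
proof -
  have "continuous_on X (\<lambda>z. \<omega> z + z \<bullet> c)"
    by (intro continuous_intros oc)
  from continuous_attains_inf[OF Xc Xne this] show ?thesis by blast
qed

lemma min_subgr:
  assumes "y \<in> X" "\<forall>z\<in>X. \<omega> y + y \<bullet> c \<le> \<omega> z + z \<bullet> c"
  shows "subgr y (- c)"
  unfolding subgr_def using assms by (auto simp: inner_diff_right inner_commute)

lemma sq_min_subgr:
  fixes k :: real and p z :: 'a
  assumes k: "k \<ge> 0" and z: "z \<in> X" and zmin: "\<forall>u\<in>X. \<omega> z + k * (norm (z - p))\<^sup>2 \<le> \<omega> u + k * (norm (u - p))\<^sup>2"
  shows "subgr z (- (2 * k) *\<^sub>R (z - p))"
  unfolding subgr_def
proof (intro conjI ballI z)
  fix u assume u: "u \<in> X"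
  have key: "\<omega> u - \<omega> z \<ge> - (2 * k) * ((z - p) \<bullet> (u - z)) - t * (k * (norm (u - z))\<^sup>2)"
    if t: "0 < t" "t \<le> 1" for t
  proof -
    define ut where "ut = (1 - t) *\<^sub>R z + t *\<^sub>R u"
    have utX: "ut \<in> X" unfolding ut_def using t z u Xcv by (intro convexD) auto
    have cv: "\<omega> ut \<le> (1 - t) * \<omega> z + t * \<omega> u" unfolding ut_def using convex_onD[OF ocv] t z u by auto
    have ut2: "ut - p = (z - p) + t *\<^sub>R (u - z)" unfolding ut_def by (simp add: algebra_simps)
    have nn: "(norm (ut - p))\<^sup>2 = (norm (z - p))\<^sup>2 + 2 * t * ((z - p) \<bullet> (u - z)) + t\<^sup>2 * (norm (u - z))\<^sup>2"
      unfolding ut2 power2_norm_eq_inner by (simp add: inner_add_left inner_add_right inner_commute power2_eq_square algebra_simps)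
    have "\<omega> z + k * (norm (z - p))\<^sup>2 \<le> \<omega> ut + k * (norm (ut - p))\<^sup>2" using zmin utX by blast
    hence "t * (\<omega> u - \<omega> z) \<ge> - k * (2 * t * ((z - p) \<bullet> (u - z)) + t\<^sup>2 * (norm (u - z))\<^sup>2)"
      using cv nn by (simp add: algebra_simps)
    hence "t * (\<omega> u - \<omega> z) \<ge> t * (- (2 * k) * ((z - p) \<bullet> (u - z)) - t * (k * (norm (u - z))\<^sup>2))"
      by (simp add: algebra_simps power2_eq_square)
    thus ?thesis using t by (simp add: mult_le_cancel_left)
  qed
  have "\<omega> u - \<omega> z \<ge> - (2 * k) * ((z - p) \<bullet> (u - z))"
    by (rule le_limit_aux[of "k * (norm (u - z))\<^sup>2"]) (use key k in auto)
  thus "\<omega> z + (- (2 * k) *\<^sub>R (z - p)) \<bullet> (u - z) \<le> \<omega> u" by simp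
qed

lemma approx_seq:
  assumes p: "p \<in> X"
  shows "\<exists>zs vs. (\<forall>i. subgr (zs i) (vs i) \<and> vs i \<bullet> (zs i - p) \<le> 0) \<and> zs \<longlonglongrightarrow> p"
proof -
  obtain B where B: "\<forall>x\<in>X. \<bar>\<omega> x\<bar> \<le> B" using om_bdd by blast
  have "\<exists>z\<in>X. \<forall>u\<in>X. \<omega> z + real (Suc i) * (norm (z - p))\<^sup>2 \<le> \<omega> u + real (Suc i) * (norm (u - p))\<^sup>2" for i
  proof -
    have "continuous_on X (\<lambda>z. \<omega> z + real (Suc i) * (norm (z - p))\<^sup>2)"
      by (intro continuous_intros oc)
    from continuous_attains_inf[OF Xc Xne this] show ?thesis by blast
  qed
  then obtain zs where zs: "\<And>i. zs i \<in> X"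
    "\<And>i. \<forall>u\<in>X. \<omega> (zs i) + real (Suc i) * (norm (zs i - p))\<^sup>2 \<le> \<omega> u + real (Suc i) * (norm (u - p))\<^sup>2"
    by metis
  define vs where "vs i = - (2 * real (Suc i)) *\<^sub>R (zs i - p)" for i
  have sg: "subgr (zs i) (vs i)" for i unfolding vs_def by (rule sq_min_subgr) (use zs in auto)
  have neg: "vs i \<bullet> (zs i - p) \<le> 0" for i
    unfolding vs_def by (simp add: mult_nonpos_nonneg)
  have bnd: "(norm (zs i - p))\<^sup>2 \<le> 2 * B / real (Suc i)" for i
  proof -
    have "\<omega> (zs i) + real (Suc i) * (norm (zs i - p))\<^sup>2 \<le> \<omega> p" using zs(2)[of i] p by auto
    moreover have "\<bar>\<omega> (zs i)\<bar> \<le> B" "\<bar>\<omega> p\<bar> \<le> B" using B zs(1) p by auto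
    ultimately have "real (Suc i) * (norm (zs i - p))\<^sup>2 \<le> 2 * B" by linarith
    thus ?thesis by (simp add: field_simps)
  qed
  have B0: "B \<ge> 0" using B p by force
  have "zs \<longlonglongrightarrow> p"
  proof (rule LIMSEQ_I)
    fix r :: real assume r: "r > 0"
    obtain N :: nat where N: "2 * B / r\<^sup>2 < real N" using reals_Archimedean2 by blast
    have "norm (zs i - p) < r" if "i \<ge> N" for i
    proof -
      have "2 * B < r\<^sup>2 * real N" using N r by (simp add: field_simps)
      also have "\<dots> \<le> r\<^sup>2 * real (Suc i)" using that by (intro mult_left_mono) auto
      finally have "2 * B / real (Suc i) < r\<^sup>2" by (simp add: field_simps)
      hence "(norm (zs i - p))\<^sup>2 < r\<^sup>2" using bnd[of i] by linarith
      thus ?thesis using r by (simp add: power_less_imp_less_base)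
    qed
    thus "\<exists>no. \<forall>i\<ge>no. norm (zs i - p) < r" by blast
  qed
  thus ?thesis using sg neg by blast
qed

lemma dense_dom:
  assumes p: "p \<in> X" and e: "e > 0"
  shows "\<exists>z\<in>dom_subdiff \<omega> X. norm (z - p) < e"
proof -
  obtain zs vs where zv: "\<forall>i. subgr (zs i) (vs i)" "zs \<longlonglongrightarrow> p" using approx_seq[OF p] by blast
  then obtain N where "\<forall>i\<ge>N. norm (zs i - p) < e" using LIMSEQ_D e by blast
  thus ?thesis using subgr_dom zv(1) by blast
qed

lemma optimality:
  assumes y: "y \<in> X" and ymin: "\<forall>z\<in>X. \<omega> y + y \<bullet> c \<le> \<omega> z + z \<bullet> c" and u: "u \<in> X"
  shows "(\<omega>' y + c) \<bullet> (u - y) \<ge> 0"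
proof -
  have ydom: "y \<in> dom_subdiff \<omega> X" using min_subgr[OF y ymin] subgr_dom by blast
  define s :: "nat \<Rightarrow> real" where "s i = inverse (real (Suc i))" for i
  have s: "s i > 0" "s i \<le> 1" for i unfolding s_def by (auto simp: field_simps)
  have pX: "y + s i *\<^sub>R (u - y) \<in> X" for i
  proof -
    have "(1 - s i) *\<^sub>R y + s i *\<^sub>R u \<in> X" using Xcv y u s[of i] by (intro convexD) auto
    thus ?thesis by (simp add: algebra_simps)
  qed
  have "\<exists>z\<in>dom_subdiff \<omega> X. norm (z - (y + s i *\<^sub>R (u - y))) < (s i)\<^sup>2" for i
    using dense_dom[OF pX, of "(s i)^2"] s[of i] by simp
  then obtain zs where zs: "\<And>i. zs i \<in> dom_subdiff \<omega> X" "\<And>i. norm (zs i - (y + s i *\<^sub>R (u - y))) < (s i)\<^sup>2"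
    by metis
  have s0: "s \<longlonglongrightarrow> 0" unfolding s_def by (rule LIMSEQ_inverse_real_of_nat)
  have zy: "zs \<longlonglongrightarrow> y"
  proof -
    have "(\<lambda>i. zs i - y) \<longlonglongrightarrow> 0"
    proof (rule Lim_null_comparison)
      show "\<forall>\<^sub>F i in sequentially. norm (zs i - y) \<le> s i * (1 + norm (u - y))"
      proof (intro always_eventually allI)
        fix i
        have "norm (zs i - y) \<le> norm (zs i - (y + s i *\<^sub>R (u - y))) + norm (s i *\<^sub>R (u - y))"
          using norm_triangle_ineq[of "zs i - (y + s i *\<^sub>R (u - y))" "s i *\<^sub>R (u - y)"] by simp
        also have "\<dots> \<le> (s i)\<^sup>2 + s i * norm (u - y)" using zs(2)[of i] s[of i] by simp
        also have "\<dots> \<le> s i + s i * norm (u - y)" using s[of i] by (simp add: power2_eq_square mult_le_cancel_left1)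
        finally show "norm (zs i - y) \<le> s i * (1 + norm (u - y))" by (simp add: algebra_simps)
      qed
      show "(\<lambda>i. s i * (1 + norm (u - y))) \<longlonglongrightarrow> 0" using tendsto_mult_left_zero[OF s0] by simp
    qed
    thus ?thesis by (simp add: LIM_zero_iff)
  qed
  have dl: "(\<lambda>i. inverse (s i) *\<^sub>R (zs i - y)) \<longlonglongrightarrow> u - y"
  proof -
    have "(\<lambda>i. inverse (s i) *\<^sub>R (zs i - y) - (u - y)) \<longlonglongrightarrow> 0"
    proof (rule Lim_null_comparison)
      show "\<forall>\<^sub>F i in sequentially. norm (inverse (s i) *\<^sub>R (zs i - y) - (u - y)) \<le> s i"
      proof (intro always_eventually allI)
        fix i
        have "inverse (s i) *\<^sub>R (zs i - y) - (u - y) = inverse (s i) *\<^sub>R (zs i - (y + s i *\<^sub>R (u - y)))"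
          using s[of i] by (simp add: algebra_simps)
        hence "norm (inverse (s i) *\<^sub>R (zs i - y) - (u - y)) = inverse (s i) * norm (zs i - (y + s i *\<^sub>R (u - y)))"
          using s[of i] by simp
        also have "\<dots> \<le> inverse (s i) * (s i)\<^sup>2" using zs(2)[of i] s[of i] by (intro mult_left_mono) auto
        also have "\<dots> = s i" using s[of i] by (simp add: power2_eq_square)
        finally show "norm (inverse (s i) *\<^sub>R (zs i - y) - (u - y)) \<le> s i" .
      qed
      show "s \<longlonglongrightarrow> 0" by (rule s0)
    qed
    thus ?thesis by (simp add: LIM_zero_iff)
  qed
  have og: "(\<lambda>i. \<omega>' (zs i)) \<longlonglongrightarrow> \<omega>' y"
    by (rule continuous_on_tendsto_compose[OF ocont zy ydom]) (use zs in auto)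
  have lim: "(\<lambda>i. (\<omega>' (zs i) + c) \<bullet> (inverse (s i) *\<^sub>R (zs i - y))) \<longlonglongrightarrow> (\<omega>' y + c) \<bullet> (u - y)"
    by (intro tendsto_inner tendsto_add og dl tendsto_const)
  have nn: "(\<omega>' (zs i) + c) \<bullet> (inverse (s i) *\<^sub>R (zs i - y)) \<ge> 0" for i
  proof -
    have zX: "zs i \<in> X" using zs(1) dom_X by blast
    have "\<omega> y \<ge> \<omega> (zs i) + \<omega>' (zs i) \<bullet> (y - zs i)" using osub zs(1) y by blast
    moreover have "\<omega> y + y \<bullet> c \<le> \<omega> (zs i) + zs i \<bullet> c" using ymin zX by blast
    ultimately have "(\<omega>' (zs i) + c) \<bullet> (zs i - y) \<ge> 0"
      by (simp add: inner_add_left inner_diff_right inner_commute algebra_simps)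
    thus ?thesis using s[of i] by simp
  qed
  show ?thesis by (rule LIMSEQ_le_const[OF lim]) (use nn in auto)
qed

lemma subgr_opt:
  assumes "subgr z v" "u \<in> X"
  shows "(\<omega>' z - v) \<bullet> (u - z) \<ge> 0"
proof -
  have "\<forall>y\<in>X. \<omega> z + z \<bullet> (- v) \<le> \<omega> y + y \<bullet> (- v)"
    using assms(1) unfolding subgr_def by (auto simp: inner_diff_right inner_commute)
  from optimality[OF _ this assms(2)] assms(1) show ?thesis unfolding subgr_def by simp
qed

lemma strong_mono:
  assumes z: "subgr z v" and x: "subgr x w"
  shows "(v - w) \<bullet> (z - x) \<ge> \<mu> * (nrm (z - x))\<^sup>2"
proof -
  have xX: "x \<in> X" and zX: "z \<in> X" using assms unfolding subgr_def by auto
  have a: "(\<omega>' z - v) \<bullet> (x - z) \<ge> 0" by (rule subgr_opt[OF z xX])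
  have b: "(\<omega>' x - w) \<bullet> (z - x) \<ge> 0" by (rule subgr_opt[OF x zX])
  have c: "(z - x) \<bullet> (\<omega>' z - \<omega>' x) \<ge> \<mu> * (nrm (z - x))\<^sup>2" using sc subgr_dom[OF z] subgr_dom[OF x] by blast
  have "(v - w) \<bullet> (z - x) = (\<omega>' z - v) \<bullet> (x - z) + (z - x) \<bullet> (\<omega>' z - \<omega>' x) + (\<omega>' x - w) \<bullet> (z - x)"
    by (simp add: inner_diff_left inner_diff_right inner_commute algebra_simps)
  thus ?thesis using a b c by linarith
qed

lemma nrm_isCont: "isCont nrm x"
  using isn_cont[OF n] continuous_on_eq_continuous_at open_UNIV by blast

lemma sc_step:
  assumes a0: "\<alpha> \<ge> 0"
    and Cl: "\<And>x w y. subgr x w \<Longrightarrow> y \<in> X \<Longrightarrow> \<omega> y - \<omega> x - w \<bullet> (y - x) \<ge> \<alpha> * (nrm (y - x))\<^sup>2"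
    and x: "subgr x w" and y: "y \<in> X"
  shows "\<omega> y - \<omega> x - w \<bullet> (y - x) \<ge> (\<alpha> / 2 + \<mu> / 4) * (nrm (y - x))\<^sup>2"
proof -
  have xX: "x \<in> X" using x unfolding subgr_def by auto
  define m where "m = (1/2) *\<^sub>R (x + y)"
  have mX: "m \<in> X" unfolding m_def using convexD[OF Xcv xX y, of "1/2" "1/2"] by (simp add: algebra_simps)
  obtain zs vs where zv: "\<And>i. subgr (zs i) (vs i)" "\<And>i. vs i \<bullet> (zs i - m) \<le> 0" "zs \<longlonglongrightarrow> m"
    using approx_seq[OF mX] by blast
  define LHS where "LHS = \<omega> y - \<omega> x - w \<bullet> (y - x)"
  define R where "R i = (\<alpha> + \<mu>) * (nrm (zs i - x))\<^sup>2 + \<alpha> * (nrm (y - zs i))\<^sup>2 + 2 * (w \<bullet> (zs i - m))" for i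
  have bound: "R i \<le> LHS" for i
  proof -
    let ?z = "zs i" and ?v = "vs i"
    have zX: "?z \<in> X" using zv(1)[of i] unfolding subgr_def by auto
    have id: "LHS = (\<omega> ?z - \<omega> x - w \<bullet> (?z - x)) + (\<omega> y - \<omega> ?z - ?v \<bullet> (y - ?z)) + (?v - w) \<bullet> (y - ?z)"
      unfolding LHS_def by (simp add: inner_diff_left inner_diff_right algebra_simps)
    have yz: "y - ?z = (?z - x) - 2 *\<^sub>R (?z - m)" unfolding m_def by (simp add: algebra_simps scaleR_2)
    have t3: "(?v - w) \<bullet> (y - ?z) = (?v - w) \<bullet> (?z - x) - 2 * (?v \<bullet> (?z - m)) + 2 * (w \<bullet> (?z - m))"
      unfolding yz by (simp add: inner_diff_left inner_diff_right algebra_simps)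
    have "\<omega> ?z - \<omega> x - w \<bullet> (?z - x) \<ge> \<alpha> * (nrm (?z - x))\<^sup>2" by (rule Cl[OF x zX])
    moreover have "\<omega> y - \<omega> ?z - ?v \<bullet> (y - ?z) \<ge> \<alpha> * (nrm (y - ?z))\<^sup>2" by (rule Cl[OF zv(1) y])
    moreover have "(?v - w) \<bullet> (?z - x) \<ge> \<mu> * (nrm (?z - x))\<^sup>2" by (rule strong_mono[OF zv(1) x])
    ultimately show ?thesis using id t3 zv(2)[of i] unfolding R_def by (simp add: algebra_simps)
  qed
  have d1: "nrm (m - x) = nrm (y - x) / 2"
  proof -
    have "m - x = (1/2) *\<^sub>R (y - x)" unfolding m_def by (simp add: algebra_simps flip: scaleR_add_left)
    thus ?thesis by (simp add: isn_scale[OF n])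
  qed
  have d2: "nrm (y - m) = nrm (y - x) / 2"
  proof -
    have "y - m = (1/2) *\<^sub>R (y - x)" unfolding m_def by (simp add: algebra_simps flip: scaleR_add_left)
    thus ?thesis by (simp add: isn_scale[OF n])
  qed
  have lim1: "(\<lambda>i. nrm (zs i - x)) \<longlonglongrightarrow> nrm (m - x)"
    by (rule isCont_tendsto_compose[OF nrm_isCont]) (intro tendsto_intros zv(3))
  have lim2: "(\<lambda>i. nrm (y - zs i)) \<longlonglongrightarrow> nrm (y - m)"
    by (rule isCont_tendsto_compose[OF nrm_isCont]) (intro tendsto_intros zv(3))
  have "R \<longlonglongrightarrow> (\<alpha> + \<mu>) * (nrm (m - x))\<^sup>2 + \<alpha> * (nrm (y - m))\<^sup>2 + 2 * (w \<bullet> (m - m))"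
    unfolding R_def by (intro tendsto_intros lim1 lim2 zv(3))
  hence "(\<alpha> + \<mu>) * (nrm (m - x))\<^sup>2 + \<alpha> * (nrm (y - m))\<^sup>2 \<le> LHS"
    using LIMSEQ_le_const2[of R] bound by auto
  moreover have "(\<alpha> + \<mu>) * (nrm (m - x))\<^sup>2 + \<alpha> * (nrm (y - m))\<^sup>2 = (\<alpha> / 2 + \<mu> / 4) * (nrm (y - x))\<^sup>2"
    unfolding d1 d2 by (simp add: power2_eq_square field_simps)
  ultimately show ?thesis unfolding LHS_def by simp
qed

lemma sc_alpha:
  "subgr x w \<Longrightarrow> y \<in> X \<Longrightarrow> \<omega> y - \<omega> x - w \<bullet> (y - x) \<ge> (\<mu> / 2 * (1 - (1/2)^k)) * (nrm (y - x))\<^sup>2"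
proof (induction k arbitrary: x w y)
  case 0
  then show ?case unfolding subgr_def by auto
next
  case (Suc k)
  have a0: "\<mu> / 2 * (1 - (1/2)^k) \<ge> 0" using mu by (simp add: power_le_one)
  have "\<omega> y - \<omega> x - w \<bullet> (y - x) \<ge> ((\<mu> / 2 * (1 - (1/2)^k)) / 2 + \<mu> / 4) * (nrm (y - x))\<^sup>2"
    by (rule sc_step[OF a0 Suc.IH Suc.prems])
  moreover have "(\<mu> / 2 * (1 - (1/2)^k)) / 2 + \<mu> / 4 = \<mu> / 2 * (1 - (1/2)^Suc k)"
    by (simp add: field_simps)
  ultimately show ?case by metis
qed

lemma strong_cvx:
  assumes "subgr x w" "y \<in> X"
  shows "\<omega> y - \<omega> x - w \<bullet> (y - x) \<ge> \<mu> / 2 * (nrm (y - x))\<^sup>2"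
proof -
  have "(\<lambda>k. (\<mu> / 2 * (1 - (1/2)^k)) * (nrm (y - x))\<^sup>2) \<longlonglongrightarrow> (\<mu> / 2 * (1 - 0)) * (nrm (y - x))\<^sup>2"
    by (intro tendsto_intros LIMSEQ_realpow_zero) auto
  thus ?thesis using LIMSEQ_le_const2 sc_alpha[OF assms] by fastforce
qed

end


context smd_cvx
begin

definition amin :: "'a \<Rightarrow> 'a" where
  "amin c = (THE y. y \<in> X \<and> (\<forall>z\<in>X. \<omega> y + y \<bullet> c \<le> \<omega> z + z \<bullet> c))"

lemma min_unique:
  assumes "y1 \<in> X" "\<forall>z\<in>X. \<omega> y1 + y1 \<bullet> c \<le> \<omega> z + z \<bullet> c"
    "y2 \<in> X" "\<forall>z\<in>X. \<omega> y2 + y2 \<bullet> c \<le> \<omega> z + z \<bullet> c"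
  shows "y1 = y2"
proof -
  have a: "(\<omega>' y1 + c) \<bullet> (y2 - y1) \<ge> 0" by (rule optimality[OF assms(1,2,3)])
  have b: "(\<omega>' y2 + c) \<bullet> (y1 - y2) \<ge> 0" by (rule optimality[OF assms(3,4,1)])
  have d1: "y1 \<in> dom_subdiff \<omega> X" using min_subgr[OF assms(1,2)] subgr_dom by blast
  have d2: "y2 \<in> dom_subdiff \<omega> X" using min_subgr[OF assms(3,4)] subgr_dom by blast
  have c: "(y2 - y1) \<bullet> (\<omega>' y2 - \<omega>' y1) \<ge> \<mu> * (nrm (y2 - y1))\<^sup>2" using sc d1 d2 by blast
  have "(y2 - y1) \<bullet> (\<omega>' y2 - \<omega>' y1) = - ((\<omega>' y1 + c) \<bullet> (y2 - y1) + (\<omega>' y2 + c) \<bullet> (y1 - y2))"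
    by (simp add: inner_diff_left inner_diff_right inner_add_left inner_commute algebra_simps)
  hence "\<mu> * (nrm (y2 - y1))\<^sup>2 \<le> 0" using a b c by linarith
  hence "nrm (y2 - y1) = 0" using mu by (simp add: mult_le_0_iff)
  thus ?thesis using isn_eq0[OF n] by simp
qed

lemma amin:
  "amin c \<in> X" "\<forall>z\<in>X. \<omega> (amin c) + amin c \<bullet> c \<le> \<omega> z + z \<bullet> c"
proof -
  have "\<exists>!y. y \<in> X \<and> (\<forall>z\<in>X. \<omega> y + y \<bullet> c \<le> \<omega> z + z \<bullet> c)"
    using min_exists[of c] min_unique by blast
  from theI'[OF this] show "amin c \<in> X" "\<forall>z\<in>X. \<omega> (amin c) + amin c \<bullet> c \<le> \<omega> z + z \<bullet> c"
    unfolding amin_def by auto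
qed

lemma amin_dom: "amin c \<in> dom_subdiff \<omega> X"
  using min_subgr[OF amin] subgr_dom by blast

lemma amin_opt: "u \<in> X \<Longrightarrow> (\<omega>' (amin c) + c) \<bullet> (u - amin c) \<ge> 0"
  by (rule optimality[OF amin])

lemma amin_lip: "nrm (amin c - amin d) \<le> dual_norm nrm (d - c) / \<mu>"
proof -
  let ?yc = "amin c" and ?yd = "amin d"
  have a: "(\<omega>' ?yc + c) \<bullet> (?yd - ?yc) \<ge> 0" by (rule amin_opt[OF amin(1)])
  have b: "(\<omega>' ?yd + d) \<bullet> (?yc - ?yd) \<ge> 0" by (rule amin_opt[OF amin(1)])
  have s: "(?yc - ?yd) \<bullet> (\<omega>' ?yc - \<omega>' ?yd) \<ge> \<mu> * (nrm (?yc - ?yd))\<^sup>2" using sc amin_dom by blast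
  have "(?yc - ?yd) \<bullet> (\<omega>' ?yc - \<omega>' ?yd) = (d - c) \<bullet> (?yc - ?yd) - ((\<omega>' ?yc + c) \<bullet> (?yd - ?yc) + (\<omega>' ?yd + d) \<bullet> (?yc - ?yd))"
    by (simp add: inner_diff_left inner_diff_right inner_add_left inner_commute algebra_simps)
  moreover have "(d - c) \<bullet> (?yc - ?yd) \<le> dual_norm nrm (d - c) * nrm (?yc - ?yd)" by (rule dual_ub[OF n])
  ultimately have "\<mu> * (nrm (?yc - ?yd))\<^sup>2 \<le> dual_norm nrm (d - c) * nrm (?yc - ?yd)" using a b s by linarith
  hence *: "nrm (?yc - ?yd) * (\<mu> * nrm (?yc - ?yd)) \<le> nrm (?yc - ?yd) * dual_norm nrm (d - c)"
    by (simp add: power2_eq_square algebra_simps)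
  show ?thesis
  proof (cases "nrm (?yc - ?yd) = 0")
    case True then show ?thesis using dual_nonneg[OF n] mu by simp
  next
    case False
    hence "nrm (?yc - ?yd) > 0" using isn_nonneg[OF n] by (simp add: less_le)
    hence "\<mu> * nrm (?yc - ?yd) \<le> dual_norm nrm (d - c)" using * by simp
    thus ?thesis using mu by (simp add: field_simps)
  qed
qed

lemma amin_cont: "continuous_on UNIV amin"
proof -
  obtain c1 where c1: "c1 > 0" "\<forall>x. c1 * norm x \<le> nrm x" using isn_lower[OF n] by blast
  obtain c2 where c2: "c2 > 0" "\<And>v. dual_norm nrm v \<le> norm v / c2" using dual_le_norm[OF n] by blast
  have "dist (amin c) (amin d) \<le> (1 / (c1 * c2 * \<mu>)) * dist c d" for c d
  proof -
    have "c1 * norm (amin c - amin d) \<le> nrm (amin c - amin d)" using c1 by blast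
    also have "\<dots> \<le> dual_norm nrm (d - c) / \<mu>" by (rule amin_lip)
    also have "\<dots> \<le> (norm (d - c) / c2) / \<mu>" using divide_right_mono[OF c2(2)[of "d - c"], of \<mu>] mu by simp
    finally have "c1 * norm (amin c - amin d) \<le> norm (d - c) / c2 / \<mu>" .
    thus ?thesis using c1 c2 mu by (simp add: dist_norm norm_minus_commute field_simps)
  qed
  hence "(1 / (c1 * c2 * \<mu>))-lipschitz_on UNIV amin" using c1 c2 mu by (intro lipschitz_onI) auto
  thus ?thesis by (rule lipschitz_on_continuous_on)
qed

lemma prox_eq: "prox \<omega> \<omega>' X x \<zeta> = amin (\<zeta> - \<omega>' x)"
  unfolding prox_def amin_def ..

lemma prox_center_eq: "prox_center \<omega> X = amin 0"
  unfolding prox_center_def amin_def by simp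

lemma prox_meas:
  assumes "h \<in> borel_measurable N" "\<forall>b\<in>space N. h b \<in> dom_subdiff \<omega> X" "k \<in> borel_measurable N"
  shows "(\<lambda>b. prox \<omega> \<omega>' X (h b) (k b)) \<in> borel_measurable N"
proof -
  have "(\<lambda>b. \<omega>' (h b)) \<in> borel_measurable N" by (rule measurable_cont_comp[OF ocont assms(1,2)])
  hence "(\<lambda>b. k b - \<omega>' (h b)) \<in> borel_measurable N" using assms(3) by measurable
  moreover have "amin \<in> borel_measurable borel" by (rule borel_measurable_continuous_onI[OF amin_cont])
  ultimately have "(\<lambda>b. amin (k b - \<omega>' (h b))) \<in> borel_measurable N" by measurable
  thus ?thesis unfolding prox_eq .
qed

definition V :: "'a \<Rightarrow> 'a \<Rightarrow> real" where
  "V a b = \<omega> b - \<omega> a - \<omega>' a \<bullet> (b - a)"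

lemma V_nonneg: "a \<in> dom_subdiff \<omega> X \<Longrightarrow> b \<in> X \<Longrightarrow> V a b \<ge> 0"
  unfolding V_def using osub by fastforce

lemma V_strong: "a \<in> dom_subdiff \<omega> X \<Longrightarrow> b \<in> X \<Longrightarrow> V a b \<ge> \<mu> / 2 * (nrm (b - a))\<^sup>2"
  unfolding V_def using strong_cvx[OF dom_subgr] by blast

lemma prox_step:
  assumes x: "x \<in> dom_subdiff \<omega> X" and u: "u \<in> X"
  shows "\<zeta> \<bullet> (x - u) \<le> V x u - V (prox \<omega> \<omega>' X x \<zeta>) u + (dual_norm nrm \<zeta>)\<^sup>2 / (2 * \<mu>)"
proof -
  define y where "y = prox \<omega> \<omega>' X x \<zeta>"
  have y: "y = amin (\<zeta> - \<omega>' x)" unfolding y_def prox_eq ..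
  have yX: "y \<in> X" unfolding y using amin by blast
  have yd: "y \<in> dom_subdiff \<omega> X" unfolding y using amin_dom by blast
  have opt: "(\<omega>' y + (\<zeta> - \<omega>' x)) \<bullet> (u - y) \<ge> 0" unfolding y by (rule amin_opt[OF u])
  have three: "V x u - V y u - V x y = (\<omega>' y - \<omega>' x) \<bullet> (u - y)"
    unfolding V_def by (simp add: inner_diff_left inner_diff_right algebra_simps)
  have vs: "V x y \<ge> \<mu> / 2 * (nrm (y - x))\<^sup>2" by (rule V_strong[OF x yX])
  have cs: "\<zeta> \<bullet> (x - y) \<le> dual_norm nrm \<zeta> * nrm (y - x)"
    using dual_ub[OF n, of \<zeta> "x - y"] isn_commute[OF n, of x y] by simp
  have am: "dual_norm nrm \<zeta> * nrm (y - x) \<le> (dual_norm nrm \<zeta>)\<^sup>2 / (2 * \<mu>) + \<mu> / 2 * (nrm (y - x))\<^sup>2"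
  proof -
    have "0 \<le> (dual_norm nrm \<zeta> - \<mu> * nrm (y - x))\<^sup>2" by simp
    hence "2 * \<mu> * (dual_norm nrm \<zeta> * nrm (y - x)) \<le> (dual_norm nrm \<zeta>)\<^sup>2 + \<mu>\<^sup>2 * (nrm (y - x))\<^sup>2"
      by (simp add: power2_eq_square algebra_simps)
    thus ?thesis using mu by (simp add: field_simps power2_eq_square)
  qed
  have "\<zeta> \<bullet> (y - u) \<le> (\<omega>' y - \<omega>' x) \<bullet> (u - y)"
    using opt by (simp add: inner_diff_left inner_diff_right inner_add_left algebra_simps)
  moreover have "\<zeta> \<bullet> (x - u) = \<zeta> \<bullet> (x - y) + \<zeta> \<bullet> (y - u)" by (simp add: inner_diff_right)
  ultimately show ?thesis using three vs cs am unfolding y_def[symmetric] by linarith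
qed

lemma om_Sup: "x \<in> X \<Longrightarrow> \<omega> x \<le> Sup (\<omega> ` X)"
proof -
  obtain B where "\<forall>x\<in>X. \<bar>\<omega> x\<bar> \<le> B" using om_bdd by blast
  hence "bdd_above (\<omega> ` X)" by (auto simp: bdd_above_def abs_le_iff intro!: exI[of _ B])
  thus "x \<in> X \<Longrightarrow> \<omega> x \<le> Sup (\<omega> ` X)" by (intro cSup_upper) auto
qed

lemma om_Inf: "x \<in> X \<Longrightarrow> Inf (\<omega> ` X) \<le> \<omega> x"
proof -
  obtain B where "\<forall>x\<in>X. \<bar>\<omega> x\<bar> \<le> B" using om_bdd by blast
  hence "bdd_below (\<omega> ` X)" by (auto simp: bdd_below_def abs_le_iff intro!: exI[of _ "-B"])
  thus "x \<in> X \<Longrightarrow> Inf (\<omega> ` X) \<le> \<omega> x" by (intro cInf_lower) auto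
qed

lemma V_center: "u \<in> X \<Longrightarrow> V (amin 0) u \<le> Sup (\<omega> ` X) - Inf (\<omega> ` X)"
proof -
  assume u: "u \<in> X"
  have "(\<omega>' (amin 0) + 0) \<bullet> (u - amin 0) \<ge> 0" by (rule amin_opt[OF u])
  thus ?thesis unfolding V_def using om_Sup[OF u] om_Inf[OF amin(1)[of 0]] by simp
qed

lemma D_sq: "(D_omega \<omega> X)\<^sup>2 = 2 * (Sup (\<omega> ` X) - Inf (\<omega> ` X))"
proof -
  have "Inf (\<omega> ` X) \<le> Sup (\<omega> ` X)" using om_Sup[OF amin(1)[of 0]] om_Inf[OF amin(1)[of 0]] by linarith
  hence "0 \<le> 2 * (Sup (\<omega> ` X) - Inf (\<omega> ` X))" by simp
  thus ?thesis unfolding D_omega_def by (rule real_sqrt_pow2)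
qed

lemma D_nonneg: "D_omega \<omega> X \<ge> 0"
proof -
  have "Inf (\<omega> ` X) \<le> Sup (\<omega> ` X)" using om_Sup[OF amin(1)[of 0]] om_Inf[OF amin(1)[of 0]] by linarith
  thus ?thesis unfolding D_omega_def by simp
qed

lemma dist_center: "u \<in> X \<Longrightarrow> nrm (u - amin 0) \<le> D_omega \<omega> X / sqrt \<mu>"
proof -
  assume u: "u \<in> X"
  have "V (amin 0) u \<le> (D_omega \<omega> X)\<^sup>2 / 2" using V_center[OF u] D_sq by simp
  hence "\<mu> / 2 * (nrm (u - amin 0))\<^sup>2 \<le> (D_omega \<omega> X)\<^sup>2 / 2"
    using V_strong[OF amin_dom[of 0] u] by (rule order.trans[rotated])
  hence "(sqrt \<mu> * nrm (u - amin 0))\<^sup>2 \<le> (D_omega \<omega> X)\<^sup>2" using mu by (simp add: power_mult_distrib)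
  hence "sqrt \<mu> * nrm (u - amin 0) \<le> D_omega \<omega> X"
    using D_nonneg by (rule power2_le_imp_le)
  thus ?thesis using mu by (simp add: field_simps)
qed

end


lemma dual_scale_le:
  fixes nrm :: "'a::euclidean_space \<Rightarrow> real"
  assumes n: "is_norm nrm" and c: "c \<ge> 0"
  shows "dual_norm nrm (c *\<^sub>R v) \<le> c * dual_norm nrm v"
  unfolding dual_norm_def[of nrm "c *\<^sub>R v"]
proof (rule cSup_least[OF dual_ne[OF n]])
  fix z assume "z \<in> {(c *\<^sub>R v) \<bullet> x | x. nrm x \<le> 1}"
  then obtain x where x: "z = (c *\<^sub>R v) \<bullet> x" "nrm x \<le> 1" by blast
  have "v \<bullet> x \<le> dual_norm nrm v * nrm x" by (rule dual_ub[OF n])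
  also have "\<dots> \<le> dual_norm nrm v" using x(2) dual_nonneg[OF n] isn_nonneg[OF n] by (auto intro: mult_left_le)
  finally show "z \<le> c * dual_norm nrm v" using x(1) c by (simp add: mult_left_mono)
qed

context smd_cvx
begin

abbreviation "itr \<gamma> G ss t \<equiv> smd_iter (prox \<omega> \<omega>' X) (prox_center \<omega> X) \<gamma> G ss t"

lemma itr_dom: "itr \<gamma> G ss t \<in> dom_subdiff \<omega> X"
proof (induction t)
  case 0 then show ?case using amin_dom prox_center_eq by simp
next
  case (Suc t) then show ?case using amin_dom prox_center_eq by (simp add: prox_eq)
qed

lemma itr_X: "itr \<gamma> G ss t \<in> X"
  using itr_dom dom_X by blast

lemma itr_1: "itr \<gamma> G ss (Suc 0) = amin 0"
  using prox_center_eq by simp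

lemma itr_Suc: "t \<ge> 1 \<Longrightarrow> itr \<gamma> G ss (Suc t) = prox \<omega> \<omega>' X (itr \<gamma> G ss t) (\<gamma> *\<^sub>R G (itr \<gamma> G ss t) (ss t))"
  by simp

lemma regret_sum:
  assumes g: "\<gamma> \<ge> 0" and u: "u \<in> X"
  shows "\<gamma> * (\<Sum>\<tau>=1..N. G (itr \<gamma> G ss \<tau>) (ss \<tau>) \<bullet> (itr \<gamma> G ss \<tau> - u))
    \<le> V (itr \<gamma> G ss 1) u - V (itr \<gamma> G ss (Suc N)) u
       + \<gamma>\<^sup>2 / (2 * \<mu>) * (\<Sum>\<tau>=1..N. (dual_norm nrm (G (itr \<gamma> G ss \<tau>) (ss \<tau>)))\<^sup>2)"
proof (induction N)
  case 0 then show ?case by simp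
next
  case (Suc N)
  let ?x = "itr \<gamma> G ss (Suc N)" and ?g = "G (itr \<gamma> G ss (Suc N)) (ss (Suc N))"
  have st: "(\<gamma> *\<^sub>R ?g) \<bullet> (?x - u) \<le> V ?x u - V (itr \<gamma> G ss (Suc (Suc N))) u + (dual_norm nrm (\<gamma> *\<^sub>R ?g))\<^sup>2 / (2 * \<mu>)"
    using prox_step[OF itr_dom[of \<gamma> G ss "Suc N"] u, of "\<gamma> *\<^sub>R ?g"] itr_Suc[of "Suc N" \<gamma> G ss] by simp
  have "(dual_norm nrm (\<gamma> *\<^sub>R ?g))\<^sup>2 \<le> (\<gamma> * dual_norm nrm ?g)\<^sup>2"
    using dual_scale_le[OF n g, of ?g] dual_nonneg[OF n, of "\<gamma> *\<^sub>R ?g"] by (intro power_mono) auto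
  hence "(dual_norm nrm (\<gamma> *\<^sub>R ?g))\<^sup>2 / (2 * \<mu>) \<le> \<gamma>\<^sup>2 / (2 * \<mu>) * (dual_norm nrm ?g)\<^sup>2"
    using mu by (simp add: divide_right_mono power_mult_distrib)
  hence st2: "\<gamma> * (?g \<bullet> (?x - u)) \<le> V ?x u - V (itr \<gamma> G ss (Suc (Suc N))) u + \<gamma>\<^sup>2 / (2 * \<mu>) * (dual_norm nrm ?g)\<^sup>2"
    using st by simp
  show ?case using Suc.IH st2 by (simp add: algebra_simps)
qed

lemma regret:
  assumes g: "\<gamma> > 0" and u: "u \<in> X"
  shows "(\<Sum>\<tau>=1..N. G (itr \<gamma> G ss \<tau>) (ss \<tau>) \<bullet> (itr \<gamma> G ss \<tau> - u))
    \<le> (D_omega \<omega> X)\<^sup>2 / (2 * \<gamma>) + \<gamma> / (2 * \<mu>) * (\<Sum>\<tau>=1..N. (dual_norm nrm (G (itr \<gamma> G ss \<tau>) (ss \<tau>)))\<^sup>2)"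
proof -
  let ?S = "\<Sum>\<tau>=1..N. G (itr \<gamma> G ss \<tau>) (ss \<tau>) \<bullet> (itr \<gamma> G ss \<tau> - u)"
  let ?T = "\<Sum>\<tau>=1..N. (dual_norm nrm (G (itr \<gamma> G ss \<tau>) (ss \<tau>)))\<^sup>2"
  have "V (itr \<gamma> G ss 1) u \<le> (D_omega \<omega> X)\<^sup>2 / 2" using V_center[OF u] D_sq itr_1 by simp
  moreover have "V (itr \<gamma> G ss (Suc N)) u \<ge> 0" by (rule V_nonneg[OF itr_dom u])
  ultimately have "\<gamma> * ?S \<le> (D_omega \<omega> X)\<^sup>2 / 2 + \<gamma>\<^sup>2 / (2 * \<mu>) * ?T"
    using regret_sum[OF less_imp_le[OF g] u, of G ss N] by linarith
  hence "(\<gamma> * ?S) / \<gamma> \<le> ((D_omega \<omega> X)\<^sup>2 / 2 + \<gamma>\<^sup>2 / (2 * \<mu>) * ?T) / \<gamma>"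
    using g by (intro divide_right_mono) auto
  moreover have "((D_omega \<omega> X)\<^sup>2 / 2 + \<gamma>\<^sup>2 / (2 * \<mu>) * ?T) / \<gamma> = (D_omega \<omega> X)\<^sup>2 / (2 * \<gamma>) + \<gamma> / (2 * \<mu>) * ?T"
    using g by (simp add: field_simps power2_eq_square)
  ultimately show ?thesis using g by simp
qed

end


lemma exp_le_x_exp_sq: "exp (x::real) \<le> x + exp (x\<^sup>2)"
proof (cases "x \<ge> 1")
  case True
  have "x \<le> x\<^sup>2" using True by (simp add: power2_eq_square)
  hence "exp x \<le> exp (x\<^sup>2)" by simp
  thus ?thesis using True by linarith
next
  case False
  have "exp x \<le> 1 + x + x\<^sup>2"
  proof (cases "x \<ge> 0")
    case True then show ?thesis using False exp_bound[of x] by simp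
  next
    case neg: False
    show ?thesis
    proof (cases "x \<le> -1")
      case True
      have "x * x \<ge> - x" using True mult_right_mono_neg[of x "-1" x] by simp
      hence "x + x\<^sup>2 \<ge> 0" by (simp add: power2_eq_square)
      moreover have "exp x \<le> 1" using neg by simp
      ultimately show ?thesis by linarith
    next
      case False
      define y where "y = - x"
      have y: "0 \<le> y" "y \<le> 1" using False neg unfolding y_def by auto
      have e: "1 + y + y\<^sup>2 / 2 \<le> exp y" by (rule exp_lower_Taylor_quadratic[OF y(1)])
      have "(y - 1/2)\<^sup>2 \<ge> 0" by simp
      hence pos: "1 - y + y\<^sup>2 > 0" by (simp add: power2_eq_square algebra_simps)
      have "1 \<le> (1 + y + y\<^sup>2 / 2) * (1 - y + y\<^sup>2)"
      proof -
        have "(1 + y + y\<^sup>2 / 2) * (1 - y + y\<^sup>2) = 1 + y\<^sup>2/2 + y^3/2 + y^4/2"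
          by (simp add: power2_eq_square power3_eq_cube power4_eq_xxxx field_simps)
        thus ?thesis using y by simp
      qed
      also have "\<dots> \<le> exp y * (1 - y + y\<^sup>2)" using e pos by (intro mult_right_mono) auto
      finally have "1 \<le> exp y * (1 - y + y\<^sup>2)" .
      hence "exp (- y) \<le> 1 - y + y\<^sup>2" by (simp add: exp_minus field_simps)
      thus ?thesis unfolding y_def by simp
    qed
  qed
  moreover have "1 + x\<^sup>2 \<le> exp (x\<^sup>2)" by (rule exp_ge_add_one_self)
  ultimately show ?thesis by linarith
qed

lemma exp_convex_pt:
  fixes p a :: real
  assumes "0 \<le> p" "p \<le> 1"
  shows "exp (p * a) \<le> p * exp a + (1 - p)"
proof -
  have "convex_on UNIV (\<lambda>x::real. exp (1 * x))" by (rule convex_on_exp) simp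
  from convex_onD[OF this, of p 0 a] assms show ?thesis by (simp add: algebra_simps)
qed

lemma exp_pow_bound:
  fixes Q :: "'s measure" and W :: "'s \<Rightarrow> real"
  assumes Q: "prob_space Q" and Wm: "W \<in> borel_measurable Q"
    and int: "integrable Q (\<lambda>s. exp (W s))" and le: "(\<integral>s. exp (W s) \<partial>Q) \<le> exp 1"
    and p: "0 \<le> p" "p \<le> 1"
  shows "integrable Q (\<lambda>s. exp (p * W s))" "(\<integral>s. exp (p * W s) \<partial>Q) \<le> exp p"
proof -
  interpret prob_space Q by (rule Q)
  have pt: "exp (p * W s) \<le> exp (p - 1) * p * exp (W s) + exp p * (1 - p)" for s
  proof -
    have "exp (p * W s) = exp p * exp (p * (W s - 1))" by (simp add: algebra_simps flip: exp_add)
    also have "\<dots> \<le> exp p * (p * exp (W s - 1) + (1 - p))"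
      using exp_convex_pt[OF p, of "W s - 1"] by (intro mult_left_mono) auto
    also have "\<dots> = exp (p - 1) * p * exp (W s) + exp p * (1 - p)"
      by (simp add: algebra_simps exp_diff)
    finally show ?thesis .
  qed
  have ir: "integrable Q (\<lambda>s. exp (p - 1) * p * exp (W s) + exp p * (1 - p))"
    using int by auto
  have pt2: "exp (p * W s) \<le> \<bar>exp (p - 1) * p * exp (W s) + exp p * (1 - p)\<bar>" for s
    using pt[of s] by linarith
  show i: "integrable Q (\<lambda>s. exp (p * W s))"
    by (rule Bochner_Integration.integrable_bound[OF ir]) (use Wm pt2 in \<open>auto intro!: always_eventually\<close>)
  have "(\<integral>s. exp (p * W s) \<partial>Q) \<le> (\<integral>s. exp (p - 1) * p * exp (W s) + exp p * (1 - p) \<partial>Q)"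
    by (rule integral_mono[OF i ir pt])
  also have "\<dots> = exp (p - 1) * p * (\<integral>s. exp (W s) \<partial>Q) + exp p * (1 - p)"
    using int by (simp add: prob_space)
  also have "\<dots> \<le> exp (p - 1) * p * exp 1 + exp p * (1 - p)"
    using le p by (intro add_mono mult_left_mono) auto
  also have "\<dots> = exp p" by (simp add: algebra_simps flip: exp_add)
  finally show "(\<integral>s. exp (p * W s) \<partial>Q) \<le> exp p" .
qed

lemma subgauss:
  fixes Q :: "'s measure" and Y :: "'s \<Rightarrow> real"
  assumes Q: "prob_space Q" and Ym: "Y \<in> borel_measurable Q" and Yi: "integrable Q Y"
    and Y0: "(\<integral>s. Y s \<partial>Q) = 0" and sig: "\<sigma> > 0"
    and int: "integrable Q (\<lambda>s. exp ((Y s)\<^sup>2 / \<sigma>\<^sup>2))" and le: "(\<integral>s. exp ((Y s)\<^sup>2 / \<sigma>\<^sup>2) \<partial>Q) \<le> exp 1"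
  shows "integrable Q (\<lambda>s. exp (l * Y s))" "(\<integral>s. exp (l * Y s) \<partial>Q) \<le> exp (l\<^sup>2 * \<sigma>\<^sup>2)"
proof -
  interpret prob_space Q by (rule Q)
  define W where "W s = (Y s)\<^sup>2 / \<sigma>\<^sup>2" for s
  have Wm: "W \<in> borel_measurable Q" unfolding W_def using Ym by measurable
  have W0: "W s \<ge> 0" for s unfolding W_def by simp
  have int': "integrable Q (\<lambda>s. exp (W s))" using int unfolding W_def .
  have le': "(\<integral>s. exp (W s) \<partial>Q) \<le> exp 1" using le unfolding W_def .
  have "integrable Q (\<lambda>s. exp (l * Y s)) \<and> (\<integral>s. exp (l * Y s) \<partial>Q) \<le> exp (l\<^sup>2 * \<sigma>\<^sup>2)"
  proof (cases "l\<^sup>2 * \<sigma>\<^sup>2 \<le> 1")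
    case True
    define p where "p = l\<^sup>2 * \<sigma>\<^sup>2"
    have p: "0 \<le> p" "p \<le> 1" using True unfolding p_def by auto
    have eq: "(l * Y s)\<^sup>2 = p * W s" for s unfolding p_def W_def using sig by (simp add: power_mult_distrib field_simps)
    note pb = exp_pow_bound[OF Q Wm int' le' p]
    have pt: "exp (l * Y s) \<le> l * Y s + exp (p * W s)" for s
      using exp_le_x_exp_sq[of "l * Y s"] eq[of s] by simp
    have ir: "integrable Q (\<lambda>s. \<bar>l * Y s\<bar> + exp (p * W s))" using pb(1) Yi by auto
    have pt2: "exp (l * Y s) \<le> \<bar>l * Y s\<bar> + exp (p * W s)" for s
      using pt[of s] abs_ge_self[of "l * Y s"] by linarith
    have i: "integrable Q (\<lambda>s. exp (l * Y s))"
      by (rule Bochner_Integration.integrable_bound[OF ir]) (use Ym pt2 in \<open>auto intro!: always_eventually\<close>)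
    have "(\<integral>s. exp (l * Y s) \<partial>Q) \<le> (\<integral>s. l * Y s + exp (p * W s) \<partial>Q)"
      using pb(1) Yi by (intro integral_mono[OF i] pt) auto
    also have "\<dots> = l * (\<integral>s. Y s \<partial>Q) + (\<integral>s. exp (p * W s) \<partial>Q)"
      using pb(1) Yi by simp
    also have "\<dots> \<le> exp p" using pb(2) Y0 by simp
    finally show ?thesis using i unfolding p_def by simp
  next
    case False
    have ph: "0 \<le> (1/2::real)" "(1/2::real) \<le> 1" by auto
    note pb = exp_pow_bound[OF Q Wm int' le' ph]
    have pt: "exp (l * Y s) \<le> exp (l\<^sup>2 * \<sigma>\<^sup>2 / 2) * exp (1/2 * W s)" for s
    proof -
      have "0 \<le> (l * \<sigma> - Y s / \<sigma>)\<^sup>2" by simp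
      hence "2 * (l * Y s) \<le> l\<^sup>2 * \<sigma>\<^sup>2 + W s"
        unfolding W_def using sig by (simp add: power2_eq_square field_simps)
      hence "l * Y s \<le> l\<^sup>2 * \<sigma>\<^sup>2 / 2 + 1/2 * W s" by simp
      thus ?thesis by (simp flip: exp_add)
    qed
    have ir: "integrable Q (\<lambda>s. exp (l\<^sup>2 * \<sigma>\<^sup>2 / 2) * exp (1/2 * W s))" using pb(1) by auto
    have i: "integrable Q (\<lambda>s. exp (l * Y s))"
      by (rule Bochner_Integration.integrable_bound[OF ir]) (use Ym pt in \<open>auto intro!: always_eventually\<close>)
    have "(\<integral>s. exp (l * Y s) \<partial>Q) \<le> (\<integral>s. exp (l\<^sup>2 * \<sigma>\<^sup>2 / 2) * exp (1/2 * W s) \<partial>Q)"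
      by (intro integral_mono[OF i ir] pt)
    also have "\<dots> = exp (l\<^sup>2 * \<sigma>\<^sup>2 / 2) * (\<integral>s. exp (1/2 * W s) \<partial>Q)" by simp
    also have "\<dots> \<le> exp (l\<^sup>2 * \<sigma>\<^sup>2 / 2) * exp (1/2)" using pb(2) by (intro mult_left_mono) auto
    also have "\<dots> \<le> exp (l\<^sup>2 * \<sigma>\<^sup>2)" using False by (simp flip: exp_add)
    finally show ?thesis using i by simp
  qed
  thus "integrable Q (\<lambda>s. exp (l * Y s))" "(\<integral>s. exp (l * Y s) \<partial>Q) \<le> exp (l\<^sup>2 * \<sigma>\<^sup>2)" by auto
qed


locale smd_prob =
  fixes M :: "'m measure" and S :: "'s measure" and \<xi> :: "nat \<Rightarrow> 'm \<Rightarrow> 's"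
  assumes P: "prob_space M"
    and xi_meas: "\<forall>t\<ge>1. \<xi> t \<in> measurable M S"
    and xi_indep: "prob_space.indep_vars M (\<lambda>_. S) \<xi> {1..}"
    and xi_ident: "\<forall>t\<ge>1. distr M S (\<xi> t) = distr M S (\<xi> 1)"
begin

abbreviation "Q \<equiv> distr M S (\<xi> 1)"
abbreviation "Pn n \<equiv> PiM {1..n} (\<lambda>_. S)"
definition Ar :: "nat \<Rightarrow> 'm \<Rightarrow> nat \<Rightarrow> 's" where
  "Ar n w = restrict (\<lambda>i. \<xi> i w) {1..n}"

lemma Q_prob: "prob_space Q"
  using P xi_meas by (intro prob_space.prob_space_distr) auto

lemma Ar_meas: "Ar n \<in> measurable M (Pn n)"
  unfolding Ar_def using xi_meas by (intro measurable_restrict) auto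

abbreviation "Bs n w \<equiv> restrict (\<lambda>i. \<xi> i w) {Suc n}"

lemma indep_n: "prob_space.indep_var M (Pn n) (Ar n) (PiM {Suc n} (\<lambda>_. S)) (Bs n)"
  unfolding Ar_def by (rule prob_space.indep_var_restrict[OF P xi_indep]) auto

lemma Bs_meas: "Bs n \<in> measurable M (PiM {Suc n} (\<lambda>_. S))"
  using xi_meas by (intro measurable_restrict) auto

lemma disint:
  assumes F: "F \<in> borel_measurable (Pn n \<Otimes>\<^sub>M S)"
  shows "(\<integral>\<^sup>+ w. F (Ar n w, \<xi> (Suc n) w) \<partial>M) = (\<integral>\<^sup>+ a. (\<integral>\<^sup>+ s. F (a, s) \<partial>Q) \<partial>distr M (Pn n) (Ar n))"
proof -
  let ?D1 = "distr M (Pn n) (Ar n)" and ?D2 = "distr M (PiM {Suc n} (\<lambda>_. S)) (Bs n)"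
  define F' where "F' p = F (fst p, snd p (Suc n))" for p :: "(nat \<Rightarrow> 's) \<times> (nat \<Rightarrow> 's)"
  have F'm: "F' \<in> borel_measurable (Pn n \<Otimes>\<^sub>M PiM {Suc n} (\<lambda>_. S))"
  proof -
    have "(\<lambda>p. (fst p, snd p (Suc n))) \<in> measurable (Pn n \<Otimes>\<^sub>M PiM {Suc n} (\<lambda>_. S)) (Pn n \<Otimes>\<^sub>M S)"
      by (intro measurable_Pair measurable_fst measurable_compose[OF measurable_snd measurable_component_singleton]) auto
    from measurable_compose[OF this F] show ?thesis unfolding F'_def .
  qed
  have eq: "?D1 \<Otimes>\<^sub>M ?D2 = distr M (Pn n \<Otimes>\<^sub>M PiM {Suc n} (\<lambda>_. S)) (\<lambda>w. (Ar n w, Bs n w))"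
    using prob_space.indep_var_distribution_eq[OF P, THEN iffD1, OF indep_n[of n]] by blast
  have Qe: "distr M S (\<xi> (Suc n)) = Q" by (rule xi_ident[rule_format]) simp
  have pm: "(\<lambda>w. (Ar n w, Bs n w)) \<in> measurable M (Pn n \<Otimes>\<^sub>M PiM {Suc n} (\<lambda>_. S))"
    by (rule measurable_Pair[OF Ar_meas Bs_meas])
  have "(\<integral>\<^sup>+ w. F (Ar n w, \<xi> (Suc n) w) \<partial>M) = (\<integral>\<^sup>+ w. F' (Ar n w, Bs n w) \<partial>M)"
    unfolding F'_def by simp
  also have "\<dots> = integral\<^sup>N (distr M (Pn n \<Otimes>\<^sub>M PiM {Suc n} (\<lambda>_. S)) (\<lambda>w. (Ar n w, Bs n w))) F'"
  proof -
    have "F' \<in> borel_measurable (distr M (Pn n \<Otimes>\<^sub>M PiM {Suc n} (\<lambda>_. S)) (\<lambda>w. (Ar n w, Bs n w)))"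
      using F'm measurable_cong_sets[OF sets_distr refl] by blast
    from nn_integral_distr[OF pm this] show ?thesis by simp
  qed
  also have "\<dots> = integral\<^sup>N (?D1 \<Otimes>\<^sub>M ?D2) F'" using eq by simp
  also have "\<dots> = (\<integral>\<^sup>+ a. (\<integral>\<^sup>+ b. F' (a, b) \<partial>?D2) \<partial>?D1)"
  proof -
    interpret D2: prob_space ?D2 by (rule prob_space.prob_space_distr[OF P Bs_meas])
    have "sets (?D1 \<Otimes>\<^sub>M ?D2) = sets (Pn n \<Otimes>\<^sub>M PiM {Suc n} (\<lambda>_. S))"
      by (intro sets_pair_measure_cong sets_distr)
    hence "F' \<in> borel_measurable (?D1 \<Otimes>\<^sub>M ?D2)" using F'm measurable_cong_sets[of "?D1 \<Otimes>\<^sub>M ?D2" "Pn n \<Otimes>\<^sub>M PiM {Suc n} (\<lambda>_. S)" borel borel] by simp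
    thus ?thesis by (rule D2.nn_integral_fst[symmetric])
  qed
  also have "\<dots> = (\<integral>\<^sup>+ a. (\<integral>\<^sup>+ s. F (a, s) \<partial>Q) \<partial>?D1)"
  proof (rule nn_integral_cong)
    fix a assume a: "a \<in> space ?D1"
    have Fa: "(\<lambda>s. F (a, s)) \<in> borel_measurable S"
      using measurable_Pair2[OF F, of a] a by simp
    have Fa': "(\<lambda>b. F (a, b (Suc n))) \<in> borel_measurable (PiM {Suc n} (\<lambda>_. S))"
      by (rule measurable_compose[OF measurable_component_singleton[of "Suc n" "{Suc n}" "\<lambda>_. S"] Fa]) simp
    have Fa'': "(\<lambda>b. F (a, b (Suc n))) \<in> borel_measurable ?D2"
      using Fa' measurable_cong_sets[OF sets_distr refl] by blast
    have "(\<integral>\<^sup>+ b. F' (a, b) \<partial>?D2) = (\<integral>\<^sup>+ b. F (a, b (Suc n)) \<partial>?D2)"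
      unfolding F'_def by simp
    also have "\<dots> = (\<integral>\<^sup>+ w. F (a, Bs n w (Suc n)) \<partial>M)"
      by (rule nn_integral_distr[OF Bs_meas Fa''])
    also have "\<dots> = (\<integral>\<^sup>+ w. F (a, \<xi> (Suc n) w) \<partial>M)" by simp
    also have "\<dots> = (\<integral>\<^sup>+ s. F (a, s) \<partial>distr M S (\<xi> (Suc n)))"
    proof -
      have xm: "\<xi> (Suc n) \<in> measurable M S" using xi_meas by simp
      have "(\<lambda>s. F (a, s)) \<in> borel_measurable (distr M S (\<xi> (Suc n)))"
        using Fa measurable_cong_sets[OF sets_distr refl] by blast
      from nn_integral_distr[OF xm this] show ?thesis by simp
    qed
    finally show "(\<integral>\<^sup>+ b. F' (a, b) \<partial>?D2) = (\<integral>\<^sup>+ s. F (a, s) \<partial>Q)" using Qe by simp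
  qed
  finally show ?thesis .
qed

end


locale smd_prob_it = smd_prob M S \<xi> for M :: "'m measure" and S :: "'s measure" and \<xi> +
  fixes it :: "nat \<Rightarrow> (nat \<Rightarrow> 's) \<Rightarrow> 'a::topological_space" and Xs :: "'a set"
  assumes dep: "\<And>t ss ss'. (\<forall>i\<in>{1..<t}. ss i = ss' i) \<Longrightarrow> it t ss = it t ss'"
    and itm: "\<And>t n. t \<le> Suc n \<Longrightarrow> it t \<in> borel_measurable (PiM {1..n} (\<lambda>_. S))"
    and itX: "\<And>t ss. it t ss \<in> Xs"
begin

definition Sn :: "('a \<Rightarrow> 's \<Rightarrow> real) \<Rightarrow> nat \<Rightarrow> (nat \<Rightarrow> 's) \<Rightarrow> real" where
  "Sn \<phi> n ss = (\<Sum>\<tau>\<in>{1..n}. \<phi> (it \<tau> ss) (ss \<tau>))"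

lemma Sn_dep: "(\<forall>i\<in>{1..n}. ss i = ss' i) \<Longrightarrow> Sn \<phi> n ss = Sn \<phi> n ss'"
  unfolding Sn_def
proof (rule sum.cong[OF refl])
  fix \<tau> assume a: "\<forall>i\<in>{1..n}. ss i = ss' i" and t: "\<tau> \<in> {1..n}"
  have "it \<tau> ss = it \<tau> ss'" using a t by (intro dep) auto
  moreover have "ss \<tau> = ss' \<tau>" using a t by auto
  ultimately show "\<phi> (it \<tau> ss) (ss \<tau>) = \<phi> (it \<tau> ss') (ss' \<tau>)" by simp
qed

lemma Sn_Ar: "Sn \<phi> n (\<lambda>i. \<xi> i w) = Sn \<phi> n (Ar n w)"
  by (rule Sn_dep) (auto simp: Ar_def)

lemma it_Ar: "it (Suc n) (\<lambda>i. \<xi> i w) = it (Suc n) (Ar n w)"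
  by (rule dep) (auto simp: Ar_def)

lemma it_Ar': "t \<le> Suc n \<Longrightarrow> it t (\<lambda>i. \<xi> i w) = it t (Ar n w)"
  by (rule dep) (auto simp: Ar_def)

lemma phi_it_meas:
  assumes \<phi>m: "(\<lambda>(x, s). \<phi> x s) \<in> borel_measurable (borel \<Otimes>\<^sub>M S)"
    and t: "t \<le> Suc n" and h: "h \<in> measurable (Pn n) S"
  shows "(\<lambda>a. \<phi> (it t a) (h a)) \<in> borel_measurable (Pn n)"
proof -
  have "(\<lambda>a. (it t a, h a)) \<in> measurable (Pn n) (borel \<Otimes>\<^sub>M S)"
    by (rule measurable_Pair[OF itm[OF t] h])
  from measurable_compose[OF this \<phi>m] show ?thesis by simp
qed

lemma Sn_meas:
  assumes \<phi>m: "(\<lambda>(x, s). \<phi> x s) \<in> borel_measurable (borel \<Otimes>\<^sub>M S)"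
  shows "Sn \<phi> n \<in> borel_measurable (Pn n)"
proof -
  have "(\<lambda>a. \<phi> (it \<tau> a) (a \<tau>)) \<in> borel_measurable (Pn n)" if "\<tau> \<in> {1..n}" for \<tau>
    using that by (intro phi_it_meas[OF \<phi>m] measurable_component_singleton) auto
  hence "(\<lambda>a. \<Sum>\<tau>\<in>{1..n}. \<phi> (it \<tau> a) (a \<tau>)) \<in> borel_measurable (Pn n)"
    by (rule borel_measurable_sum)
  thus ?thesis unfolding Sn_def[abs_def] .
qed

lemma Sn_meas_M:
  assumes \<phi>m: "(\<lambda>(x, s). \<phi> x s) \<in> borel_measurable (borel \<Otimes>\<^sub>M S)"
  shows "(\<lambda>w. Sn \<phi> n (\<lambda>i. \<xi> i w)) \<in> borel_measurable M"
  unfolding Sn_Ar by (rule measurable_compose[OF Ar_meas Sn_meas[OF \<phi>m]])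

lemma it_meas_M: "(\<lambda>w. it t (\<lambda>i. \<xi> i w)) \<in> borel_measurable M"
proof -
  have "(\<lambda>w. it t (Ar t w)) \<in> borel_measurable M"
    by (rule measurable_compose[OF Ar_meas itm]) simp
  moreover have "it t (\<lambda>i. \<xi> i w) = it t (Ar t w)" for w by (rule it_Ar') simp
  ultimately show ?thesis by simp
qed

lemma mgf_chain:
  assumes \<phi>m: "(\<lambda>(x, s). \<phi> x s) \<in> borel_measurable (borel \<Otimes>\<^sub>M S)"
    and bnd: "\<And>x. x \<in> Xs \<Longrightarrow> (\<integral>\<^sup>+ s. ennreal (exp (l * \<phi> x s)) \<partial>Q) \<le> ennreal B"
    and B: "B \<ge> 0"
  shows "(\<integral>\<^sup>+ w. ennreal (exp (l * Sn \<phi> n (\<lambda>i. \<xi> i w))) \<partial>M) \<le> ennreal (B ^ n)"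
proof (induction n)
  case 0
  have "(\<integral>\<^sup>+ w. ennreal (exp (l * Sn \<phi> 0 (\<lambda>i. \<xi> i w))) \<partial>M) = (\<integral>\<^sup>+ w. 1 \<partial>M)"
    unfolding Sn_def by simp
  also have "\<dots> = 1" using prob_space.emeasure_space_1[OF P] by simp
  finally show ?case by simp
next
  case (Suc n)
  let ?D1 = "distr M (Pn n) (Ar n)"
  define F where "F p = ennreal (exp (l * Sn \<phi> n (fst p))) * ennreal (exp (l * \<phi> (it (Suc n) (fst p)) (snd p)))"
    for p :: "(nat \<Rightarrow> 's) \<times> 's"
  have Fm: "F \<in> borel_measurable (Pn n \<Otimes>\<^sub>M S)"
  proof -
    have m1: "(\<lambda>p. Sn \<phi> n (fst p)) \<in> borel_measurable (Pn n \<Otimes>\<^sub>M S)"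
      by (rule measurable_compose[OF measurable_fst Sn_meas[OF \<phi>m]])
    have "(\<lambda>p. (it (Suc n) (fst p), snd p)) \<in> measurable (Pn n \<Otimes>\<^sub>M S) (borel \<Otimes>\<^sub>M S)"
      by (intro measurable_Pair measurable_compose[OF measurable_fst itm] measurable_snd) simp
    from measurable_compose[OF this \<phi>m]
    have m2: "(\<lambda>p. \<phi> (it (Suc n) (fst p)) (snd p)) \<in> borel_measurable (Pn n \<Otimes>\<^sub>M S)" by simp
    show ?thesis unfolding F_def[abs_def] using m1 m2 by measurable
  qed
  have pt: "ennreal (exp (l * Sn \<phi> (Suc n) (\<lambda>i. \<xi> i w))) = F (Ar n w, \<xi> (Suc n) w)" for w
  proof -
    have "Sn \<phi> (Suc n) (\<lambda>i. \<xi> i w) = Sn \<phi> n (\<lambda>i. \<xi> i w) + \<phi> (it (Suc n) (\<lambda>i. \<xi> i w)) (\<xi> (Suc n) w)"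
      unfolding Sn_def by simp
    also have "\<dots> = Sn \<phi> n (Ar n w) + \<phi> (it (Suc n) (Ar n w)) (\<xi> (Suc n) w)"
      using Sn_Ar it_Ar by simp
    finally show ?thesis unfolding F_def by (simp add: distrib_left exp_add ennreal_mult)
  qed
  have "(\<integral>\<^sup>+ w. ennreal (exp (l * Sn \<phi> (Suc n) (\<lambda>i. \<xi> i w))) \<partial>M) = (\<integral>\<^sup>+ w. F (Ar n w, \<xi> (Suc n) w) \<partial>M)"
    using pt by simp
  also have "\<dots> = (\<integral>\<^sup>+ a. (\<integral>\<^sup>+ s. F (a, s) \<partial>Q) \<partial>?D1)" by (rule disint[OF Fm])
  also have "\<dots> \<le> (\<integral>\<^sup>+ a. ennreal (exp (l * Sn \<phi> n a)) * ennreal B \<partial>?D1)"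
  proof (rule nn_integral_mono)
    fix a assume a: "a \<in> space ?D1"
    have ma: "(\<lambda>s. ennreal (exp (l * \<phi> (it (Suc n) a) s))) \<in> borel_measurable Q"
    proof -
      have "(\<lambda>s. F (a, s)) \<in> borel_measurable S" using measurable_Pair2[OF Fm, of a] a by simp
      have "(\<lambda>s. (it (Suc n) a, s)) \<in> measurable S (borel \<Otimes>\<^sub>M S)" by simp
      from measurable_compose[OF this \<phi>m]
      have "(\<lambda>s. \<phi> (it (Suc n) a) s) \<in> borel_measurable S" by simp
      hence "(\<lambda>s. ennreal (exp (l * \<phi> (it (Suc n) a) s))) \<in> borel_measurable S" by measurable
      thus ?thesis using measurable_cong_sets[OF sets_distr refl] by blast
    qed
    have "(\<integral>\<^sup>+ s. F (a, s) \<partial>Q) = ennreal (exp (l * Sn \<phi> n a)) * (\<integral>\<^sup>+ s. ennreal (exp (l * \<phi> (it (Suc n) a) s)) \<partial>Q)"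
    proof -
      have "(\<lambda>s. F (a, s)) = (\<lambda>s. ennreal (exp (l * Sn \<phi> n a)) * ennreal (exp (l * \<phi> (it (Suc n) a) s)))"
        by (simp add: F_def fun_eq_iff)
      thus ?thesis using nn_integral_cmult[OF ma, of "ennreal (exp (l * Sn \<phi> n a))"] by simp
    qed
    also have "\<dots> \<le> ennreal (exp (l * Sn \<phi> n a)) * ennreal B"
      by (intro mult_left_mono bnd itX) simp
    finally show "(\<integral>\<^sup>+ s. F (a, s) \<partial>Q) \<le> ennreal (exp (l * Sn \<phi> n a)) * ennreal B" .
  qed
  also have "\<dots> = ennreal B * (\<integral>\<^sup>+ a. ennreal (exp (l * Sn \<phi> n a)) \<partial>?D1)"
  proof -
    have "(\<lambda>a. ennreal (exp (l * Sn \<phi> n a))) \<in> borel_measurable ?D1"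
      using Sn_meas[OF \<phi>m, of n] measurable_cong_sets[OF sets_distr refl] by measurable
    from nn_integral_multc[OF this] show ?thesis by (simp add: mult.commute)
  qed
  also have "(\<integral>\<^sup>+ a. ennreal (exp (l * Sn \<phi> n a)) \<partial>?D1) = (\<integral>\<^sup>+ w. ennreal (exp (l * Sn \<phi> n (Ar n w))) \<partial>M)"
  proof -
    have "(\<lambda>a. ennreal (exp (l * Sn \<phi> n a))) \<in> borel_measurable (Pn n)"
      using Sn_meas[OF \<phi>m, of n] by measurable
    hence "(\<lambda>a. ennreal (exp (l * Sn \<phi> n a))) \<in> borel_measurable ?D1"
      using measurable_cong_sets[OF sets_distr refl] by blast
    from nn_integral_distr[OF Ar_meas this] show ?thesis .
  qed
  also have "\<dots> = (\<integral>\<^sup>+ w. ennreal (exp (l * Sn \<phi> n (\<lambda>i. \<xi> i w))) \<partial>M)" using Sn_Ar by simp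
  also have "ennreal B * \<dots> \<le> ennreal B * ennreal (B ^ n)" by (intro mult_left_mono Suc.IH) simp
  also have "\<dots> = ennreal (B ^ Suc n)" using B by (simp add: ennreal_mult[symmetric])
  finally show ?case .
qed

lemma null_chain:
  assumes Bad: "Bad \<in> sets (borel \<Otimes>\<^sub>M S)"
    and ae: "\<And>x. x \<in> Xs \<Longrightarrow> AE s in Q. (x, s) \<notin> Bad"
  shows "emeasure M {w \<in> space M. (it (Suc n) (\<lambda>i. \<xi> i w), \<xi> (Suc n) w) \<in> Bad} = 0"
proof -
  let ?D1 = "distr M (Pn n) (Ar n)"
  define F where "F p = (indicator Bad (it (Suc n) (fst p), snd p) :: ennreal)" for p :: "(nat \<Rightarrow> 's) \<times> 's"
  have pm: "(\<lambda>p. (it (Suc n) (fst p), snd p)) \<in> measurable (Pn n \<Otimes>\<^sub>M S) (borel \<Otimes>\<^sub>M S)"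
    by (intro measurable_Pair measurable_compose[OF measurable_fst itm] measurable_snd) simp
  have Fm: "F \<in> borel_measurable (Pn n \<Otimes>\<^sub>M S)"
    unfolding F_def by (rule measurable_compose[OF pm borel_measurable_indicator[OF Bad]])
  have mset: "{w \<in> space M. (it (Suc n) (\<lambda>i. \<xi> i w), \<xi> (Suc n) w) \<in> Bad} \<in> sets M"
  proof -
    have "(\<lambda>w. (it (Suc n) (\<lambda>i. \<xi> i w), \<xi> (Suc n) w)) \<in> measurable M (borel \<Otimes>\<^sub>M S)"
      using xi_meas by (intro measurable_Pair it_meas_M) auto
    from measurable_sets[OF this Bad] show ?thesis by (simp add: vimage_def Int_def conj_commute)
  qed
  have "emeasure M {w \<in> space M. (it (Suc n) (\<lambda>i. \<xi> i w), \<xi> (Suc n) w) \<in> Bad}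
      = (\<integral>\<^sup>+ w. indicator {w \<in> space M. (it (Suc n) (\<lambda>i. \<xi> i w), \<xi> (Suc n) w) \<in> Bad} w \<partial>M)"
    by (rule nn_integral_indicator[symmetric, OF mset])
  also have "\<dots> = (\<integral>\<^sup>+ w. F (Ar n w, \<xi> (Suc n) w) \<partial>M)"
    by (intro nn_integral_cong) (auto simp: F_def it_Ar indicator_def)
  also have "\<dots> = (\<integral>\<^sup>+ a. (\<integral>\<^sup>+ s. F (a, s) \<partial>Q) \<partial>?D1)" by (rule disint[OF Fm])
  also have "\<dots> = (\<integral>\<^sup>+ a. 0 \<partial>?D1)"
  proof (rule nn_integral_cong)
    fix a assume a: "a \<in> space ?D1"
    have "AE s in Q. F (a, s) = 0" using ae[OF itX[of "Suc n" a]] by eventually_elim (simp add: F_def)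
    hence "(\<integral>\<^sup>+ s. F (a, s) \<partial>Q) = (\<integral>\<^sup>+ s. 0 \<partial>Q)" by (rule nn_integral_cong_AE)
    thus "(\<integral>\<^sup>+ s. F (a, s) \<partial>Q) = 0" by simp
  qed
  finally show ?thesis by simp
qed

lemma chernoff:
  assumes Zm: "Z \<in> borel_measurable M" and l: "l \<ge> 0"
  shows "emeasure M {w \<in> space M. t \<le> Z w} \<le> ennreal (exp (- l * t)) * (\<integral>\<^sup>+ w. ennreal (exp (l * Z w)) \<partial>M)"
proof -
  have mset: "{w \<in> space M. t \<le> Z w} \<in> sets M" using Zm by measurable
  have "emeasure M {w \<in> space M. t \<le> Z w} = (\<integral>\<^sup>+ w. indicator {w \<in> space M. t \<le> Z w} w \<partial>M)"
    by (rule nn_integral_indicator[symmetric, OF mset])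
  also have "\<dots> \<le> (\<integral>\<^sup>+ w. ennreal (exp (- l * t)) * ennreal (exp (l * Z w)) \<partial>M)"
  proof (rule nn_integral_mono)
    fix w assume w: "w \<in> space M"
    show "indicator {w \<in> space M. t \<le> Z w} w \<le> ennreal (exp (- l * t)) * ennreal (exp (l * Z w))"
    proof (cases "t \<le> Z w")
      case True
      have "1 \<le> exp (- l * t + l * Z w)" using True l by (simp add: mult_left_mono algebra_simps)
      hence "ennreal 1 \<le> ennreal (exp (- l * t) * exp (l * Z w))" by (simp add: exp_add[symmetric])
      thus ?thesis using True w by (simp add: ennreal_mult)
    qed simp
  qed
  also have "\<dots> = ennreal (exp (- l * t)) * (\<integral>\<^sup>+ w. ennreal (exp (l * Z w)) \<partial>M)"
    by (rule nn_integral_cmult) (use Zm in measurable)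
  finally show ?thesis .
qed

lemma tail:
  assumes \<phi>m: "(\<lambda>(x, s). \<phi> x s) \<in> borel_measurable (borel \<Otimes>\<^sub>M S)"
    and sig: "\<sigma> > 0" and n: "n \<ge> 1" and Th: "\<Theta> \<ge> 0"
    and mgf: "\<And>x l. x \<in> Xs \<Longrightarrow> (\<integral>\<^sup>+ s. ennreal (exp (l * \<phi> x s)) \<partial>Q) \<le> ennreal (exp (l\<^sup>2 * \<sigma>\<^sup>2))"
  shows "emeasure M {w \<in> space M. \<Theta> * \<sigma> * sqrt n \<le> Sn \<phi> n (\<lambda>i. \<xi> i w)} \<le> ennreal (exp (- \<Theta>\<^sup>2 / 4))"
proof -
  define q where "q = sqrt (real n)"
  have q: "q > 0" "q\<^sup>2 = real n" unfolding q_def using n by auto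
  define l where "l = \<Theta> / (2 * \<sigma> * q)"
  have l: "l \<ge> 0" unfolding l_def using Th sig q by simp
  let ?t = "\<Theta> * \<sigma> * q"
  have "emeasure M {w \<in> space M. ?t \<le> Sn \<phi> n (\<lambda>i. \<xi> i w)}
      \<le> ennreal (exp (- l * ?t)) * (\<integral>\<^sup>+ w. ennreal (exp (l * Sn \<phi> n (\<lambda>i. \<xi> i w))) \<partial>M)"
    by (rule chernoff[OF Sn_meas_M[OF \<phi>m] l])
  also have "\<dots> \<le> ennreal (exp (- l * ?t)) * ennreal (exp (l\<^sup>2 * \<sigma>\<^sup>2) ^ n)"
    by (intro mult_left_mono mgf_chain[OF \<phi>m mgf]) auto
  also have "\<dots> = ennreal (exp (- l * ?t + real n * (l\<^sup>2 * \<sigma>\<^sup>2)))"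
  proof -
    have "exp (l\<^sup>2 * \<sigma>\<^sup>2) ^ n = exp (real n * (l\<^sup>2 * \<sigma>\<^sup>2))" by (rule exp_of_nat_mult[symmetric])
    hence "exp (- l * ?t) * exp (l\<^sup>2 * \<sigma>\<^sup>2) ^ n = exp (- l * ?t + real n * (l\<^sup>2 * \<sigma>\<^sup>2))"
      by (simp add: exp_add[symmetric])
    thus ?thesis by (simp add: ennreal_mult[symmetric])
  qed
  also have "- l * ?t + real n * (l\<^sup>2 * \<sigma>\<^sup>2) = - \<Theta>\<^sup>2 / 4"
    unfolding l_def q(2)[symmetric] using sig q(1) by (simp add: field_simps power2_eq_square)
  finally show ?thesis unfolding q_def by simp
qed

end


lemma smd_iter_dep:
  "(\<forall>i\<in>{1..<t}. ss i = ss' i) \<Longrightarrow> smd_iter P x1 \<gamma> G ss t = smd_iter P x1 \<gamma> G ss' t"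
proof (induction t)
  case 0 then show ?case by simp
next
  case (Suc t)
  have "\<forall>i\<in>{1..<t}. ss i = ss' i" using Suc.prems by auto
  hence ih: "smd_iter P x1 \<gamma> G ss t = smd_iter P x1 \<gamma> G ss' t" by (rule Suc.IH)
  show ?case
  proof (cases "t = 0")
    case True then show ?thesis by simp
  next
    case False
    hence "ss t = ss' t" using Suc.prems by auto
    thus ?thesis using ih False by simp
  qed
qed

context smd_cvx
begin

lemma itr_meas:
  assumes Gm: "(\<lambda>(x, s). G x s) \<in> borel_measurable (borel \<Otimes>\<^sub>M S)"
  shows "t \<le> Suc n \<Longrightarrow> (\<lambda>a. itr \<gamma> G a t) \<in> borel_measurable (PiM {1..n} (\<lambda>_. S))"
proof (induction t)
  case 0 then show ?case by simp
next
  case (Suc t)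
  show ?case
  proof (cases "t = 0")
    case True then show ?thesis by simp
  next
    case False
    have ih: "(\<lambda>a. itr \<gamma> G a t) \<in> borel_measurable (PiM {1..n} (\<lambda>_. S))" using Suc by simp
    have tn: "t \<in> {1..n}" using False Suc.prems by auto
    have "(\<lambda>a. (itr \<gamma> G a t, a t)) \<in> measurable (PiM {1..n} (\<lambda>_. S)) (borel \<Otimes>\<^sub>M S)"
      by (rule measurable_Pair[OF ih measurable_component_singleton[OF tn]])
    from measurable_compose[OF this Gm]
    have "(\<lambda>a. G (itr \<gamma> G a t) (a t)) \<in> borel_measurable (PiM {1..n} (\<lambda>_. S))" by simp
    hence k: "(\<lambda>a. \<gamma> *\<^sub>R G (itr \<gamma> G a t) (a t)) \<in> borel_measurable (PiM {1..n} (\<lambda>_. S))" by measurable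
    have "(\<lambda>a. prox \<omega> \<omega>' X (itr \<gamma> G a t) (\<gamma> *\<^sub>R G (itr \<gamma> G a t) (a t))) \<in> borel_measurable (PiM {1..n} (\<lambda>_. S))"
      by (rule prox_meas[OF ih _ k]) (simp add: itr_dom)
    thus ?thesis using False by simp
  qed
qed

end

lemma nn_to_real:
  fixes Q :: "'s measure"
  assumes fm: "f \<in> borel_measurable Q" and f0: "\<And>s. f s \<ge> 0"
    and le: "(\<integral>\<^sup>+ s. ennreal (f s) \<partial>Q) \<le> ennreal c" and c: "c \<ge> 0"
  shows "integrable Q f" "(\<integral>s. f s \<partial>Q) \<le> c"
proof -
  have "(\<integral>\<^sup>+ s. ennreal (norm (f s)) \<partial>Q) < \<infinity>" using le f0 by (simp add: order_le_less_trans)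
  thus i: "integrable Q f" by (rule integrableI_bounded[OF fm])
  have "ennreal (\<integral>s. f s \<partial>Q) = (\<integral>\<^sup>+ s. ennreal (f s) \<partial>Q)"
    by (rule nn_integral_eq_integral[symmetric, OF i]) (simp add: f0)
  hence "ennreal (\<integral>s. f s \<partial>Q) \<le> ennreal c" using le by simp
  thus "(\<integral>s. f s \<partial>Q) \<le> c" using c by (simp add: ennreal_le_iff)
qed

lemma subgauss_nn:
  fixes Q :: "'s measure" and Y :: "'s \<Rightarrow> real"
  assumes Q: "prob_space Q" and Ym: "Y \<in> borel_measurable Q" and Yi: "integrable Q Y"
    and Y0: "(\<integral>s. Y s \<partial>Q) = 0" and sig: "\<sigma> > 0"
    and le: "(\<integral>\<^sup>+ s. ennreal (exp ((Y s)\<^sup>2 / \<sigma>\<^sup>2)) \<partial>Q) \<le> ennreal (exp 1)"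
  shows "(\<integral>\<^sup>+ s. ennreal (exp (l * Y s)) \<partial>Q) \<le> ennreal (exp (l\<^sup>2 * \<sigma>\<^sup>2))"
proof -
  have em: "(\<lambda>s. exp ((Y s)\<^sup>2 / \<sigma>\<^sup>2)) \<in> borel_measurable Q" using Ym by measurable
  have r: "integrable Q (\<lambda>s. exp ((Y s)\<^sup>2 / \<sigma>\<^sup>2))" "(\<integral>s. exp ((Y s)\<^sup>2 / \<sigma>\<^sup>2) \<partial>Q) \<le> exp 1"
    using nn_to_real[OF em _ le] by auto
  note sg = subgauss[OF Q Ym Yi Y0 sig r(1) r(2), of l]
  have "(\<integral>\<^sup>+ s. ennreal (exp (l * Y s)) \<partial>Q) = ennreal (\<integral>s. exp (l * Y s) \<partial>Q)"
    by (rule nn_integral_eq_integral[OF sg(1)]) auto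
  also have "\<dots> \<le> ennreal (exp (l\<^sup>2 * \<sigma>\<^sup>2))" using sg(2) by (simp add: ennreal_leI)
  finally show ?thesis .
qed


lemma regret_arith:
  fixes D \<mu> M2 L q :: real
  assumes D: "D > 0" and mu: "\<mu> > 0" and M2: "M2 \<ge> 0" and L: "L \<ge> 0" and A: "M2\<^sup>2 + L\<^sup>2 > 0" and q: "q > 0"
  shows "D\<^sup>2 / (2 * (D * sqrt \<mu> / (sqrt (2 * (M2\<^sup>2 + L\<^sup>2)) * q)))
      + (D * sqrt \<mu> / (sqrt (2 * (M2\<^sup>2 + L\<^sup>2)) * q)) / (2 * \<mu>) * (q\<^sup>2 * (L + M2)\<^sup>2)
    \<le> q * (D * (M2\<^sup>2 + 2 * L\<^sup>2) / sqrt (2 * (M2\<^sup>2 + L\<^sup>2) * \<mu>) + D * M2\<^sup>2 / sqrt (2 * (M2\<^sup>2 + L\<^sup>2) * \<mu>))"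
proof -
  define r where "r = sqrt (2 * (M2\<^sup>2 + L\<^sup>2))"
  define m where "m = sqrt \<mu>"
  have r: "r > 0" "r\<^sup>2 = 2 * (M2\<^sup>2 + L\<^sup>2)" unfolding r_def using A by auto
  have m: "m > 0" "m\<^sup>2 = \<mu>" unfolding m_def using mu by auto
  have rm: "sqrt (2 * (M2\<^sup>2 + L\<^sup>2) * \<mu>) = r * m" unfolding r_def m_def by (simp add: real_sqrt_mult)
  have sq: "(L + M2)\<^sup>2 \<le> r\<^sup>2"
  proof -
    have "0 \<le> (L - M2)\<^sup>2" by simp
    thus ?thesis unfolding r(2) by (simp add: power2_eq_square algebra_simps)
  qed
  have lhs: "D\<^sup>2 / (2 * (D * m / (r * q))) + (D * m / (r * q)) / (2 * \<mu>) * (q\<^sup>2 * (L + M2)\<^sup>2)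
      = D * q * (r\<^sup>2 + (L + M2)\<^sup>2) / (2 * r * m)"
    unfolding m(2)[symmetric] using D r(1) m(1) q by (simp add: field_simps power2_eq_square)
  have rhs: "q * (D * (M2\<^sup>2 + 2 * L\<^sup>2) / (r * m) + D * M2\<^sup>2 / (r * m)) = D * q * (2 * r\<^sup>2) / (2 * r * m)"
    using r m by (simp add: field_simps)
  have "D * q * (r\<^sup>2 + (L + M2)\<^sup>2) \<le> D * q * (2 * r\<^sup>2)"
    using sq D q by (intro mult_left_mono) auto
  hence "D * q * (r\<^sup>2 + (L + M2)\<^sup>2) / (2 * r * m) \<le> D * q * (2 * r\<^sup>2) / (2 * r * m)"
    using r m by (intro divide_right_mono) auto
  thus ?thesis using lhs rhs unfolding rm r_def[symmetric] m_def[symmetric] by simp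
qed


theorem corollary2:
  fixes nrm :: "'a::euclidean_space \<Rightarrow> real"
    and X :: "'a set"
    and \<omega> :: "'a \<Rightarrow> real" and \<omega>' :: "'a \<Rightarrow> 'a" and \<mu> :: real
    and M :: "'m measure" and S :: "'s measure" and \<xi> :: "nat \<Rightarrow> 'm \<Rightarrow> 's"
    and g :: "'a \<Rightarrow> 's \<Rightarrow> real" and G :: "'a \<Rightarrow> 's \<Rightarrow> 'a"
    and f :: "'a \<Rightarrow> real" and f' :: "'a \<Rightarrow> 'a"
    and L M1 M2 :: real and N :: nat and x_star :: 'a
    and \<Theta>1 \<Theta>2 \<Theta>3 :: real
  assumes norm: "is_norm nrm"
    and X: "X \<noteq> {}" "closed X" "bounded X" "convex X"
    and omega: "convex_on X \<omega>" "continuous_on X \<omega>"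
    and omega'_subgrad: "\<forall>x\<in>dom_subdiff \<omega> X. \<forall>y\<in>X. \<omega> y \<ge> \<omega> x + \<omega>' x \<bullet> (y - x)"
    and omega'_cont: "continuous_on (dom_subdiff \<omega> X) \<omega>'"
    and mu: "\<mu> > 0"
    and strongly_convex: "\<forall>x\<in>dom_subdiff \<omega> X. \<forall>x'\<in>dom_subdiff \<omega> X.
           (x' - x) \<bullet> (\<omega>' x' - \<omega>' x) \<ge> \<mu> * (nrm (x' - x))\<^sup>2"
    and P: "prob_space M"
    and xi_meas: "\<forall>t\<ge>1. \<xi> t \<in> measurable M S"
    and xi_indep: "prob_space.indep_vars M (\<lambda>_. S) \<xi> {1..}"
    and xi_ident: "\<forall>t\<ge>1. distr M S (\<xi> t) = distr M S (\<xi> 1)"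
    and g_meas: "(\<lambda>(x, s). g x s) \<in> borel_measurable (borel \<Otimes>\<^sub>M S)"
    and G_meas: "(\<lambda>(x, s). G x s) \<in> borel_measurable (borel \<Otimes>\<^sub>M S)"
    and g_convex: "\<forall>s\<in>space S. convex_on X (\<lambda>x. g x s)"
    and G_subgrad: "\<forall>s\<in>space S. \<forall>x\<in>X. \<forall>y\<in>X. g y s \<ge> g x s + G x s \<bullet> (y - x)"
    and g_int: "\<forall>x\<in>X. integrable (distr M S (\<xi> 1)) (g x)"
    and G_int: "\<forall>x\<in>X. integrable (distr M S (\<xi> 1)) (G x)"
    and f_def: "\<forall>x\<in>X. f x = (\<integral>s. g x s \<partial>distr M S (\<xi> 1))"
    and f'_def: "\<forall>x\<in>X. f' x = (\<integral>s. G x s \<partial>distr M S (\<xi> 1))"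
    and f_convex: "convex_on X f"
    and f_lipschitz: "\<exists>C. C-lipschitz_on X f"
    and x_star: "x_star \<in> X" "\<forall>x\<in>X. f x_star \<le> f x"
    \<comment> \<open>Assumption 1\<close>
    and A1: "\<forall>x\<in>X. dual_norm nrm (f' x) \<le> L"
    \<comment> \<open>Assumption 2\<close>
    and A2: "\<forall>x\<in>X. \<forall>y\<in>X. f y \<ge> f x + f' x \<bullet> (y - x)"
    \<comment> \<open>Assumption 3\<close>
    and A3: "\<forall>x\<in>X. (\<integral>\<^sup>+s. ennreal ((g x s - f x)\<^sup>2) \<partial>distr M S (\<xi> 1)) \<le> ennreal (M1\<^sup>2)"
            "\<forall>x\<in>X. (\<integral>\<^sup>+s. ennreal ((dual_norm nrm (G x s - f' x))\<^sup>2) \<partial>distr M S (\<xi> 1))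
                     \<le> ennreal (M2\<^sup>2)"
    \<comment> \<open>Assumption 5\<close>
    and A5: "\<forall>x\<in>X. (\<integral>\<^sup>+s. ennreal (exp ((g x s - f x)\<^sup>2 / M1\<^sup>2)) \<partial>distr M S (\<xi> 1))
                     \<le> ennreal (exp 1)"
            "\<forall>x\<in>X. AE s in distr M S (\<xi> 1). dual_norm nrm (G x s - f' x) \<le> M2"
    and params: "M1 > 0" "M2 \<ge> 0" "L \<ge> 0" "M2\<^sup>2 + L\<^sup>2 > 0"
    and N: "N \<ge> 1"
    and Theta: "\<Theta>1 > 0" "\<Theta>2 > 0" "\<Theta>3 > 0"
  shows
    "let D = D_omega \<omega> X;
         \<gamma> = smd_stepsize D \<mu> M2 L N;
         x = (\<lambda>t w. smd_iter (prox \<omega> \<omega>' X) (prox_center \<omega> X) \<gamma> G (\<lambda>i. \<xi> i w) t);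
         gN = (\<lambda>w. (\<Sum>\<tau>=1..N. g (x \<tau> w) (\<xi> \<tau> w)) / real N);
         k1 = K1 D \<mu> M2 L;
         k2 = K2 D \<mu> M1 M2 L;
         Up1 = (\<lambda>w. gN w + a_bound M1 \<Theta>1 N);
         Low1 = (\<lambda>w. gN w - b_bound k1 k2 M1 \<Theta>2 N - a_bound M1 \<Theta>3 N)
     in measure M {w \<in> space M. Low1 w \<le> f x_star \<and> f x_star \<le> Up1 w}
          \<ge> 1 - exp (- \<Theta>1\<^sup>2 / 4) - exp (1 - \<Theta>2\<^sup>2) - exp (- \<Theta>2\<^sup>2 / 4) - exp (- \<Theta>3\<^sup>2 / 4)"
proof -
  have Xcpt: "compact X" using X(2,3) compact_eq_bounded_closed by blast
  interpret C: smd_cvx nrm X \<omega> \<omega>' \<mu>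
    apply unfold_locales
    using norm X(1) Xcpt X(4) omega omega'_subgrad omega'_cont mu strongly_convex by auto
  interpret PR: smd_prob M S \<xi>
    unfolding smd_prob_def using P xi_meas xi_indep xi_ident by (intro conjI)
  define D where "D = D_omega \<omega> X"
  define \<gamma> where "\<gamma> = smd_stepsize D \<mu> M2 L N"
  define xx where "xx = (\<lambda>t ss. smd_iter (prox \<omega> \<omega>' X) (prox_center \<omega> X) \<gamma> G ss t)"
  interpret PI: smd_prob_it M S \<xi> xx X
    apply unfold_locales
    subgoal for t ss ss' unfolding xx_def by (rule smd_iter_dep)
    subgoal for t n unfolding xx_def by (rule C.itr_meas[OF G_meas])
    subgoal for t ss unfolding xx_def by (rule C.itr_X)
    done
  have xxX: "xx t ss \<in> X" for t ss unfolding xx_def by (rule C.itr_X)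
  let ?Q = "distr M S (\<xi> 1)"
  have Qp: "prob_space ?Q" by (rule PR.Q_prob)
  interpret Qs: prob_space ?Q by (rule Qp)
  have ic: "integrable (distr M S (\<xi> (Suc 0))) (\<lambda>_. c)" for c :: real
    using Qs.integrable_const[of c] by simp
  have icv: "integrable (distr M S (\<xi> (Suc 0))) (\<lambda>_. c)" for c :: 'a
    using Qs.integrable_const[of c] by simp
  have ms1: "measure (distr M S (\<xi> (Suc 0))) (space S) = 1"
  proof -
    have "measure ?Q (space ?Q) = 1" by (rule Qs.prob_space)
    thus ?thesis by simp
  qed
  have es1: "emeasure (distr M S (\<xi> (Suc 0))) (space S) = 1"
  proof -
    have "emeasure ?Q (space ?Q) = 1" by (rule Qs.emeasure_space_1)
    thus ?thesis by simp
  qed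
  define fI where "fI x = (\<integral>s. g x s \<partial>?Q)" for x
  define f'I where "f'I x = (\<integral>s. G x s \<partial>?Q)" for x
  have fI: "x \<in> X \<Longrightarrow> fI x = f x" for x using f_def unfolding fI_def by auto
  have f'I: "x \<in> X \<Longrightarrow> f'I x = f' x" for x using f'_def unfolding f'I_def by auto
  have setsQ: "sets (borel \<Otimes>\<^sub>M ?Q) = sets (borel \<Otimes>\<^sub>M S)"
    by (intro sets_pair_measure_cong sets_distr refl)
  have gmQ: "(\<lambda>(x, s). g x s) \<in> borel_measurable (borel \<Otimes>\<^sub>M ?Q)"
    using g_meas measurable_cong_sets[OF setsQ refl] by blast
  have GmQ: "(\<lambda>(x, s). G x s) \<in> borel_measurable (borel \<Otimes>\<^sub>M ?Q)"
    using G_meas measurable_cong_sets[OF setsQ refl] by blast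
  have fIm: "fI \<in> borel_measurable borel"
    unfolding fI_def by (rule Qs.borel_measurable_lebesgue_integral[OF gmQ])
  have f'Im: "f'I \<in> borel_measurable borel"
    unfolding f'I_def by (rule Qs.borel_measurable_lebesgue_integral[OF GmQ])
  define \<phi>d where "\<phi>d x s = g x s - fI x" for x s
  define \<phi>n where "\<phi>n x s = - \<phi>d x s" for x s
  define \<phi>D where "\<phi>D x s = - ((G x s - f'I x) \<bullet> (x - x_star))" for x s
  have \<phi>dm: "(\<lambda>(x, s). \<phi>d x s) \<in> borel_measurable (borel \<Otimes>\<^sub>M S)"
  proof -
    have "(\<lambda>(x, s). \<phi>d x s) = (\<lambda>p. (\<lambda>(x, s). g x s) p - fI (fst p))" by (auto simp: \<phi>d_def fun_eq_iff)
    thus ?thesis using borel_measurable_diff[OF g_meas measurable_compose[OF measurable_fst fIm]] by simp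
  qed
  have \<phi>nm: "(\<lambda>(x, s). \<phi>n x s) \<in> borel_measurable (borel \<Otimes>\<^sub>M S)"
  proof -
    have "(\<lambda>(x, s). \<phi>n x s) = (\<lambda>p. - (\<lambda>(x, s). \<phi>d x s) p)" by (auto simp: \<phi>n_def fun_eq_iff)
    thus ?thesis using borel_measurable_uminus[OF \<phi>dm] by simp
  qed
  have Gdm: "(\<lambda>p. G (fst p) (snd p) - f'I (fst p)) \<in> borel_measurable (borel \<Otimes>\<^sub>M S)"
  proof -
    have "(\<lambda>p. G (fst p) (snd p) - f'I (fst p)) = (\<lambda>p. (\<lambda>(x, s). G x s) p - f'I (fst p))" by (auto simp: fun_eq_iff)
    thus ?thesis using borel_measurable_diff[OF G_meas measurable_compose[OF measurable_fst f'Im]] by simp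
  qed
  have \<phi>Dm: "(\<lambda>(x, s). \<phi>D x s) \<in> borel_measurable (borel \<Otimes>\<^sub>M S)"
  proof -
    have "(\<lambda>(x, s). \<phi>D x s) = (\<lambda>p. - ((G (fst p) (snd p) - f'I (fst p)) \<bullet> (fst p - x_star)))" by (auto simp: \<phi>D_def fun_eq_iff)
    moreover have "(\<lambda>p. fst p - x_star) \<in> borel_measurable (borel \<Otimes>\<^sub>M S)"
      by (intro borel_measurable_diff measurable_fst borel_measurable_const)
    ultimately show ?thesis using borel_measurable_uminus[OF borel_measurable_inner[OF Gdm]] by simp
  qed
  define dn where "dn p = dual_norm nrm (G (fst p) (snd p) - f'I (fst p))" for p
  have dnm: "dn \<in> borel_measurable (borel \<Otimes>\<^sub>M S)"
  proof -
    have "dual_norm nrm \<in> borel_measurable borel" by (rule borel_measurable_continuous_onI[OF dual_cont[OF norm]])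
    from measurable_compose[OF Gdm this] show ?thesis unfolding dn_def[abs_def] .
  qed
  have XB: "X \<in> sets borel" using X(2) by simp
  define Bad where "Bad = {p \<in> space (borel \<Otimes>\<^sub>M S). fst p \<in> X \<and> M2 < dn p}"
  have BadS: "Bad \<in> sets (borel \<Otimes>\<^sub>M S)"
  proof -
    have "Bad = (fst -` X \<inter> space (borel \<Otimes>\<^sub>M S)) \<inter> {p \<in> space (borel \<Otimes>\<^sub>M S). M2 < dn p}"
      unfolding Bad_def by auto
    moreover have "fst -` X \<inter> space (borel \<Otimes>\<^sub>M S) \<in> sets (borel \<Otimes>\<^sub>M S)"
      by (rule measurable_sets[OF measurable_fst XB])
    moreover have "{p \<in> space (borel \<Otimes>\<^sub>M S). M2 < dn p} \<in> sets (borel \<Otimes>\<^sub>M S)"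
      using dnm by measurable
    ultimately show ?thesis by simp
  qed
  have ae: "AE s in ?Q. (x, s) \<notin> Bad" if x: "x \<in> X" for x
  proof -
    have "AE s in ?Q. dual_norm nrm (G x s - f' x) \<le> M2" using A5(2) x by blast
    thus ?thesis by eventually_elim (auto simp: Bad_def dn_def f'I[OF x])
  qed
  have null: "emeasure M {w \<in> space M. (xx \<tau> (\<lambda>i. \<xi> i w), \<xi> \<tau> w) \<in> Bad} = 0" if t: "\<tau> \<ge> 1" for \<tau>
    using PI.null_chain[OF BadS ae, of "\<tau> - 1"] t by simp
  have toQ: "h \<in> borel_measurable (borel \<Otimes>\<^sub>M S) \<Longrightarrow> h \<in> borel_measurable (borel \<Otimes>\<^sub>M ?Q)" for h :: "'a \<times> 's \<Rightarrow> real"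
    using measurable_cong_sets[OF setsQ refl] by blast
  have secm: "(\<lambda>s. \<phi> x s) \<in> borel_measurable ?Q" if "(\<lambda>(x, s). \<phi> x s) \<in> borel_measurable (borel \<Otimes>\<^sub>M S)" for \<phi> :: "'a \<Rightarrow> 's \<Rightarrow> real" and x
    using measurable_Pair2[OF toQ[OF that], of x] by simp
  have mgd: "(\<integral>\<^sup>+ s. ennreal (exp (l * \<phi>d x s)) \<partial>?Q) \<le> ennreal (exp (l\<^sup>2 * M1\<^sup>2))" if x: "x \<in> X" for x l
  proof (rule subgauss_nn[OF Qp secm[OF \<phi>dm]])
    show "integrable ?Q (\<phi>d x)" unfolding \<phi>d_def[abs_def]
      by (intro Bochner_Integration.integrable_diff) (use g_int x in \<open>auto simp: ic icv\<close>)
    show "(\<integral>s. \<phi>d x s \<partial>?Q) = 0" unfolding \<phi>d_def using g_int x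
      by (subst Bochner_Integration.integral_diff) (auto simp: fI_def ic ms1)
    show "M1 > 0" by (rule params(1))
    show "(\<integral>\<^sup>+ s. ennreal (exp ((\<phi>d x s)\<^sup>2 / M1\<^sup>2)) \<partial>?Q) \<le> ennreal (exp 1)"
      using A5(1) x unfolding \<phi>d_def fI[OF x] by blast
  qed
  have mgn: "(\<integral>\<^sup>+ s. ennreal (exp (l * \<phi>n x s)) \<partial>?Q) \<le> ennreal (exp (l\<^sup>2 * M1\<^sup>2))" if x: "x \<in> X" for x l
  proof (rule subgauss_nn[OF Qp secm[OF \<phi>nm]])
    show "integrable ?Q (\<phi>n x)" unfolding \<phi>n_def[abs_def] \<phi>d_def
      by (intro Bochner_Integration.integrable_minus Bochner_Integration.integrable_diff) (use g_int x in \<open>auto simp: ic icv\<close>)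
    show "(\<integral>s. \<phi>n x s \<partial>?Q) = 0" unfolding \<phi>n_def \<phi>d_def using g_int x
      by (subst Bochner_Integration.integral_minus, subst Bochner_Integration.integral_diff) (auto simp: fI_def ic ms1)
    show "M1 > 0" by (rule params(1))
    show "(\<integral>\<^sup>+ s. ennreal (exp ((\<phi>n x s)\<^sup>2 / M1\<^sup>2)) \<partial>?Q) \<le> ennreal (exp 1)"
      using A5(1) x unfolding \<phi>n_def \<phi>d_def fI[OF x] power2_minus by blast
  qed
  define c where "c = 2 * D * M2 / sqrt \<mu>"
  have c0: "c \<ge> 0" unfolding c_def D_def using C.D_nonneg params(2) mu by simp
  have nrm_star: "nrm (x - x_star) \<le> 2 * D / sqrt \<mu>" if x: "x \<in> X" for x
  proof -
    have "nrm (x - x_star) \<le> nrm (x - C.amin 0) + nrm (C.amin 0 - x_star)" by (rule isn_diff_tri[OF norm])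
    also have "nrm (C.amin 0 - x_star) = nrm (x_star - C.amin 0)" by (rule isn_commute[OF norm])
    finally show ?thesis using C.dist_center[OF x] C.dist_center[OF x_star(1)] unfolding D_def by simp
  qed
  have \<phi>D_bnd: "\<bar>\<phi>D x s\<bar> \<le> c" if x: "x \<in> X" and s: "dual_norm nrm (G x s - f' x) \<le> M2" for x s
  proof -
    have "\<bar>\<phi>D x s\<bar> \<le> dual_norm nrm (G x s - f'I x) * nrm (x - x_star)"
      unfolding \<phi>D_def using dual_abs[OF norm] by simp
    also have "\<dots> \<le> M2 * (2 * D / sqrt \<mu>)"
      using s f'I[OF x] nrm_star[OF x] isn_nonneg[OF norm] params(2)
      by (intro mult_mono) auto
    also have "\<dots> = c" unfolding c_def by simp
    finally show ?thesis .
  qed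
  have mgD: "(\<integral>\<^sup>+ s. ennreal (exp (l * \<phi>D x s)) \<partial>?Q) \<le> ennreal (exp (l\<^sup>2 * c\<^sup>2))" if x: "x \<in> X" and cp: "c > 0" for x l
  proof (rule subgauss_nn[OF Qp secm[OF \<phi>Dm]])
    have i1: "integrable ?Q (\<lambda>s. (G x s - f'I x) \<bullet> (x - x_star))"
      by (intro integrable_inner_left Bochner_Integration.integrable_diff) (use G_int x in \<open>auto simp: ic icv\<close>)
    thus "integrable ?Q (\<phi>D x)" unfolding \<phi>D_def[abs_def] by auto
    have "(\<integral>s. (G x s - f'I x) \<bullet> (x - x_star) \<partial>?Q) = (\<integral>s. (G x s - f'I x) \<partial>?Q) \<bullet> (x - x_star)"
      by (rule integral_inner_left) (use G_int x in \<open>auto simp: ic icv\<close>)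
    also have "(\<integral>s. (G x s - f'I x) \<partial>?Q) = 0" using G_int x
      by (subst Bochner_Integration.integral_diff) (auto simp: f'I_def icv ms1)
    finally show "(\<integral>s. \<phi>D x s \<partial>?Q) = 0" unfolding \<phi>D_def by simp
    show "c > 0" by (rule cp)
    have "AE s in ?Q. exp ((\<phi>D x s)\<^sup>2 / c\<^sup>2) \<le> exp 1"
    proof -
      have "AE s in ?Q. dual_norm nrm (G x s - f' x) \<le> M2" using A5(2) x by blast
      thus ?thesis
      proof eventually_elim
        case (elim s)
        have "\<bar>\<phi>D x s\<bar> \<le> c" by (rule \<phi>D_bnd[OF x elim])
        hence "(\<phi>D x s)\<^sup>2 \<le> c\<^sup>2" using power_mono[OF _ abs_ge_zero, of "\<phi>D x s" c 2] by simp
        hence "(\<phi>D x s)\<^sup>2 / c\<^sup>2 \<le> 1" using cp by (simp add: divide_le_eq_1)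
        thus ?case by simp
      qed
    qed
    hence "(\<integral>\<^sup>+ s. ennreal (exp ((\<phi>D x s)\<^sup>2 / c\<^sup>2)) \<partial>?Q) \<le> (\<integral>\<^sup>+ s. ennreal (exp 1) \<partial>?Q)"
      by (intro nn_integral_mono_AE) (auto elim!: eventually_mono)
    also have "\<dots> = ennreal (exp 1)" by (simp add: es1)
    finally show "(\<integral>\<^sup>+ s. ennreal (exp ((\<phi>D x s)\<^sup>2 / c\<^sup>2)) \<partial>?Q) \<le> ennreal (exp 1)" .
  qed
  define E1 where "E1 = {w \<in> space M. \<Theta>1 * M1 * sqrt N \<le> PI.Sn \<phi>n N (\<lambda>i. \<xi> i w)}"
  define E2 where "E2 = {w \<in> space M. \<Theta>3 * M1 * sqrt N \<le> PI.Sn \<phi>d N (\<lambda>i. \<xi> i w)}"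
  define E3 where "E3 = (if c > 0 then {w \<in> space M. \<Theta>2 * c * sqrt N \<le> PI.Sn \<phi>D N (\<lambda>i. \<xi> i w)} else {})"
  define E0 where "E0 = (\<Union>\<tau>\<in>{1..N}. {w \<in> space M. (xx \<tau> (\<lambda>i. \<xi> i w), \<xi> \<tau> w) \<in> Bad})"
  have T1: "emeasure M E1 \<le> ennreal (exp (- \<Theta>1\<^sup>2 / 4))"
    unfolding E1_def by (rule PI.tail[OF \<phi>nm params(1) N less_imp_le[OF Theta(1)] mgn])
  have T2: "emeasure M E2 \<le> ennreal (exp (- \<Theta>3\<^sup>2 / 4))"
    unfolding E2_def by (rule PI.tail[OF \<phi>dm params(1) N less_imp_le[OF Theta(3)] mgd])
  have T3: "emeasure M E3 \<le> ennreal (exp (- \<Theta>2\<^sup>2 / 4))"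
  proof (cases "c > 0")
    case True
    have "emeasure M {w \<in> space M. \<Theta>2 * c * sqrt N \<le> PI.Sn \<phi>D N (\<lambda>i. \<xi> i w)} \<le> ennreal (exp (- \<Theta>2\<^sup>2 / 4))"
      by (rule PI.tail[OF \<phi>Dm True N less_imp_le[OF Theta(2)] mgD[OF _ True]])
    thus ?thesis unfolding E3_def using True by simp
  qed (simp add: E3_def)
  interpret PM: prob_space M by (rule P)
  define q where "q = sqrt (real N)"
  have q: "q > 0" "q\<^sup>2 = real N" unfolding q_def using N by auto
  have D0: "D \<ge> 0" unfolding D_def by (rule C.D_nonneg)
  define s0 where "s0 = sqrt (2 * (M2\<^sup>2 + L\<^sup>2) * \<mu>)"
  define W where "W = K1 D \<mu> M2 L + D * M2\<^sup>2 / s0"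
  have good_dual: "dual_norm nrm (G x s) \<le> L + M2" if x: "x \<in> X" and s: "dual_norm nrm (G x s - f'I x) \<le> M2" for x s
  proof -
    have "dual_norm nrm (G x s) = dual_norm nrm (f'I x + (G x s - f'I x))" by simp
    also have "\<dots> \<le> dual_norm nrm (f'I x) + dual_norm nrm (G x s - f'I x)" by (rule dual_tri[OF norm])
    moreover have "dual_norm nrm (f'I x) \<le> L" using A1 x f'I[OF x] by simp
    ultimately show ?thesis using s by linarith
  qed
  have regret_w: "(\<Sum>\<tau>=1..N. G (xx \<tau> ss) (ss \<tau>) \<bullet> (xx \<tau> ss - x_star)) \<le> q * W"
    if good: "\<forall>\<tau>\<in>{1..N}. dual_norm nrm (G (xx \<tau> ss) (ss \<tau>) - f'I (xx \<tau> ss)) \<le> M2" for ss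
  proof (cases "D = 0")
    case True
    have single: "u = C.amin 0" if u: "u \<in> X" for u
    proof -
      have "nrm (u - C.amin 0) \<le> 0" using C.dist_center[OF u] True unfolding D_def by simp
      hence "nrm (u - C.amin 0) = 0" using isn_nonneg[OF norm, of "u - C.amin 0"] by linarith
      thus ?thesis using isn_eq0[OF norm] by simp
    qed
    have "xx \<tau> ss - x_star = 0" for \<tau> using single[OF xxX] single[OF x_star(1)] by simp
    hence "(\<Sum>\<tau>=1..N. G (xx \<tau> ss) (ss \<tau>) \<bullet> (xx \<tau> ss - x_star)) = 0" by simp
    moreover have "W = 0" unfolding W_def K1_def True by simp
    ultimately show ?thesis by simp
  next
    case False
    hence Dp: "D > 0" using D0 by simp
    have gam: "\<gamma> = D * sqrt \<mu> / (sqrt (2 * (M2\<^sup>2 + L\<^sup>2)) * q)" unfolding \<gamma>_def smd_stepsize_def q_def ..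
    have gp: "\<gamma> > 0" unfolding gam using Dp mu q params(4) by simp
    have R: "(\<Sum>\<tau>=1..N. G (xx \<tau> ss) (ss \<tau>) \<bullet> (xx \<tau> ss - x_star))
      \<le> D\<^sup>2 / (2 * \<gamma>) + \<gamma> / (2 * \<mu>) * (\<Sum>\<tau>=1..N. (dual_norm nrm (G (xx \<tau> ss) (ss \<tau>)))\<^sup>2)"
      using C.regret[OF gp x_star(1), where N=N and G=G and ss=ss] unfolding xx_def D_def by simp
    have "(\<Sum>\<tau>=1..N. (dual_norm nrm (G (xx \<tau> ss) (ss \<tau>)))\<^sup>2) \<le> (\<Sum>\<tau>=1..N. (L + M2)\<^sup>2)"
    proof (rule sum_mono)
      fix \<tau> assume t: "\<tau> \<in> {1..N}"
      show "(dual_norm nrm (G (xx \<tau> ss) (ss \<tau>)))\<^sup>2 \<le> (L + M2)\<^sup>2"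
        using good_dual[OF xxX good[rule_format, OF t]] dual_nonneg[OF norm] by (intro power_mono) auto
    qed
    also have "\<dots> = q\<^sup>2 * (L + M2)\<^sup>2" using q(2) by simp
    finally have S2: "(\<Sum>\<tau>=1..N. (dual_norm nrm (G (xx \<tau> ss) (ss \<tau>)))\<^sup>2) \<le> q\<^sup>2 * (L + M2)\<^sup>2" .
    have "\<gamma> / (2 * \<mu>) * (\<Sum>\<tau>=1..N. (dual_norm nrm (G (xx \<tau> ss) (ss \<tau>)))\<^sup>2) \<le> \<gamma> / (2 * \<mu>) * (q\<^sup>2 * (L + M2)\<^sup>2)"
      using gp mu S2 by (intro mult_left_mono) auto
    moreover have "D\<^sup>2 / (2 * \<gamma>) + \<gamma> / (2 * \<mu>) * (q\<^sup>2 * (L + M2)\<^sup>2) \<le> q * W"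
      using regret_arith[OF Dp mu params(2) params(3) params(4) q(1)] unfolding W_def K1_def s0_def gam .
    ultimately show ?thesis using R by linarith
  qed
  define gN where "gN w = (\<Sum>\<tau>=1..N. g (xx \<tau> (\<lambda>i. \<xi> i w)) (\<xi> \<tau> w)) / real N" for w
  define Ev where "Ev = {w \<in> space M. gN w - b_bound (K1 D \<mu> M2 L) (K2 D \<mu> M1 M2 L) M1 \<Theta>2 N - a_bound M1 \<Theta>3 N \<le> f x_star
                  \<and> f x_star \<le> gN w + a_bound M1 \<Theta>1 N}"
  have Npos: "real N > 0" using N by simp
  have det: "w \<in> Ev" if Th2: "\<Theta>2 \<ge> 1" and w: "w \<in> space M"
    and n0: "w \<notin> E0" and n1: "w \<notin> E1" and n2: "w \<notin> E2" and n3: "w \<notin> E3" for w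
  proof -
    let ?ss = "\<lambda>i. \<xi> i w"
    let ?x = "\<lambda>\<tau>. xx \<tau> ?ss" and ?s = "\<lambda>\<tau>. \<xi> \<tau> w"
    have sS: "?s \<tau> \<in> space S" if "\<tau> \<ge> 1" for \<tau>
      using measurable_space[OF xi_meas[rule_format, OF that] w] .
    have good: "dual_norm nrm (G (?x \<tau>) (?s \<tau>) - f'I (?x \<tau>)) \<le> M2" if t: "\<tau> \<in> {1..N}" for \<tau>
    proof -
      have "(?x \<tau>, ?s \<tau>) \<notin> Bad" using n0 w t unfolding E0_def by blast
      moreover have "(?x \<tau>, ?s \<tau>) \<in> space (borel \<Otimes>\<^sub>M S)" using sS t by (simp add: space_pair_measure)
      ultimately show ?thesis using xxX unfolding Bad_def dn_def by auto
    qed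
    have good': "dual_norm nrm (G (?x \<tau>) (?s \<tau>) - f' (?x \<tau>)) \<le> M2" if t: "\<tau> \<in> {1..N}" for \<tau>
      using good[OF t] f'I[OF xxX] by simp
    have Sd: "PI.Sn \<phi>d N ?ss = (\<Sum>\<tau>=1..N. \<phi>d (?x \<tau>) (?s \<tau>))" unfolding PI.Sn_def ..
    have Sn: "PI.Sn \<phi>n N ?ss = - (\<Sum>\<tau>=1..N. \<phi>d (?x \<tau>) (?s \<tau>))" unfolding PI.Sn_def \<phi>n_def by (simp add: sum_negf)
    have SD: "PI.Sn \<phi>D N ?ss = (\<Sum>\<tau>=1..N. \<phi>D (?x \<tau>) (?s \<tau>))" unfolding PI.Sn_def ..
    have sumg: "(\<Sum>\<tau>=1..N. g (?x \<tau>) (?s \<tau>)) = real N * gN w" unfolding gN_def using Npos by simp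
    have e1: "PI.Sn \<phi>n N ?ss < \<Theta>1 * M1 * q" using n1 w unfolding E1_def q_def by auto
    have e2: "PI.Sn \<phi>d N ?ss < \<Theta>3 * M1 * q" using n2 w unfolding E2_def q_def by auto
    have e3: "PI.Sn \<phi>D N ?ss \<le> \<Theta>2 * c * q"
    proof (cases "c > 0")
      case True then show ?thesis using n3 w unfolding E3_def q_def by auto
    next
      case False
      hence c00: "c = 0" using c0 by simp
      have "PI.Sn \<phi>D N ?ss \<le> (\<Sum>\<tau>=1..N. (0::real))" unfolding SD
      proof (rule sum_mono)
        fix \<tau> assume t: "\<tau> \<in> {1..N}"
        show "\<phi>D (?x \<tau>) (?s \<tau>) \<le> 0" using \<phi>D_bnd[OF xxX good'[OF t]] c00 by simp
      qed
      thus ?thesis using c00 by simp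
    qed
    have pw_up: "f x_star \<le> g (?x \<tau>) (?s \<tau>) - \<phi>d (?x \<tau>) (?s \<tau>)" for \<tau>
      using x_star(2) xxX[of \<tau> ?ss] fI[OF xxX] unfolding \<phi>d_def by simp
    have pw_low: "f x_star \<ge> g (?x \<tau>) (?s \<tau>) - \<phi>d (?x \<tau>) (?s \<tau>) - G (?x \<tau>) (?s \<tau>) \<bullet> (?x \<tau> - x_star) - \<phi>D (?x \<tau>) (?s \<tau>)" for \<tau>
    proof -
      have "f x_star \<ge> f (?x \<tau>) + f' (?x \<tau>) \<bullet> (x_star - ?x \<tau>)" using A2 xxX x_star(1) by blast
      moreover have "f (?x \<tau>) = g (?x \<tau>) (?s \<tau>) - \<phi>d (?x \<tau>) (?s \<tau>)" using fI[OF xxX] unfolding \<phi>d_def by simp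
      moreover have "f' (?x \<tau>) \<bullet> (x_star - ?x \<tau>) = - (G (?x \<tau>) (?s \<tau>) \<bullet> (?x \<tau> - x_star)) - \<phi>D (?x \<tau>) (?s \<tau>)"
        using f'I[OF xxX] unfolding \<phi>D_def by (simp add: inner_diff_left inner_diff_right algebra_simps)
      ultimately show ?thesis by simp
    qed
    have up_sum: "real N * f x_star \<le> real N * gN w - (\<Sum>\<tau>=1..N. \<phi>d (?x \<tau>) (?s \<tau>))"
    proof -
      have "(\<Sum>\<tau>=1..N. f x_star) \<le> (\<Sum>\<tau>=1..N. g (?x \<tau>) (?s \<tau>) - \<phi>d (?x \<tau>) (?s \<tau>))"
        by (rule sum_mono) (rule pw_up)
      thus ?thesis using sumg by (simp add: sum_subtractf)
    qed
    have low_sum: "real N * f x_star \<ge> real N * gN w - (\<Sum>\<tau>=1..N. \<phi>d (?x \<tau>) (?s \<tau>))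
        - (\<Sum>\<tau>=1..N. G (?x \<tau>) (?s \<tau>) \<bullet> (?x \<tau> - x_star)) - (\<Sum>\<tau>=1..N. \<phi>D (?x \<tau>) (?s \<tau>))"
    proof -
      have "(\<Sum>\<tau>=1..N. f x_star) \<ge> (\<Sum>\<tau>=1..N. g (?x \<tau>) (?s \<tau>) - \<phi>d (?x \<tau>) (?s \<tau>) - G (?x \<tau>) (?s \<tau>) \<bullet> (?x \<tau> - x_star) - \<phi>D (?x \<tau>) (?s \<tau>))"
        by (rule sum_mono) (rule pw_low)
      thus ?thesis using sumg by (simp add: sum_subtractf)
    qed
    have rw: "(\<Sum>\<tau>=1..N. G (?x \<tau>) (?s \<tau>) \<bullet> (?x \<tau> - x_star)) \<le> q * W"
      using regret_w[of ?ss] good by simp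
    have ab: "a_bound M1 \<Theta> N = \<Theta> * M1 / q" for \<Theta> unfolding a_bound_def q_def ..
    have up: "f x_star \<le> gN w + a_bound M1 \<Theta>1 N"
    proof -
      have "real N * f x_star \<le> real N * gN w + \<Theta>1 * M1 * q" using up_sum e1 Sn by linarith
      also have "\<dots> = real N * (gN w + a_bound M1 \<Theta>1 N)"
        unfolding ab q(2)[symmetric] using q(1) by (simp add: field_simps power2_eq_square)
      finally show ?thesis using Npos by simp
    qed
    have bnd: "\<Theta>2 * c + W \<le> K1 D \<mu> M2 L + \<Theta>2 * (K2 D \<mu> M1 M2 L - M1)"
    proof -
      have K2e: "K2 D \<mu> M1 M2 L - M1 = D * M2\<^sup>2 / s0 + c" unfolding K2_def c_def s0_def by simp
      have "D * M2\<^sup>2 / s0 \<ge> 0" unfolding s0_def using D0 mu by (intro divide_nonneg_nonneg mult_nonneg_nonneg) auto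
      hence "1 * (D * M2\<^sup>2 / s0) \<le> \<Theta>2 * (D * M2\<^sup>2 / s0)" using Th2 by (intro mult_right_mono) auto
      hence "D * M2\<^sup>2 / s0 \<le> \<Theta>2 * (D * M2\<^sup>2 / s0)" by simp
      thus ?thesis unfolding W_def K2e by (simp add: algebra_simps)
    qed
    have low: "gN w - b_bound (K1 D \<mu> M2 L) (K2 D \<mu> M1 M2 L) M1 \<Theta>2 N - a_bound M1 \<Theta>3 N \<le> f x_star"
    proof -
      have "real N * f x_star \<ge> real N * gN w - q * (\<Theta>3 * M1 + \<Theta>2 * c + W)"
        using low_sum e2 e3 rw Sd SD by (simp add: algebra_simps)
      moreover have "q * (\<Theta>3 * M1 + \<Theta>2 * c + W) \<le> q * (\<Theta>3 * M1 + (K1 D \<mu> M2 L + \<Theta>2 * (K2 D \<mu> M1 M2 L - M1)))"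
        using bnd q(1) by (intro mult_left_mono) auto
      moreover have "real N * gN w - q * (\<Theta>3 * M1 + (K1 D \<mu> M2 L + \<Theta>2 * (K2 D \<mu> M1 M2 L - M1)))
          = real N * (gN w - b_bound (K1 D \<mu> M2 L) (K2 D \<mu> M1 M2 L) M1 \<Theta>2 N - a_bound M1 \<Theta>3 N)"
        unfolding ab b_bound_def q_def[symmetric] q(2)[symmetric] using q(1) by (simp add: field_simps power2_eq_square)
      ultimately have "real N * (gN w - b_bound (K1 D \<mu> M2 L) (K2 D \<mu> M1 M2 L) M1 \<Theta>2 N - a_bound M1 \<Theta>3 N) \<le> real N * f x_star"
        by linarith
      thus ?thesis using Npos by simp
    qed
    show ?thesis unfolding Ev_def using w up low by blast
  qed
  have E1m: "E1 \<in> sets M" unfolding E1_def using borel_measurable_iff_ge[THEN iffD1, OF PI.Sn_meas_M[OF \<phi>nm, of N]] by blast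
  have E2m: "E2 \<in> sets M" unfolding E2_def using borel_measurable_iff_ge[THEN iffD1, OF PI.Sn_meas_M[OF \<phi>dm, of N]] by blast
  have E3m: "E3 \<in> sets M" unfolding E3_def using borel_measurable_iff_ge[THEN iffD1, OF PI.Sn_meas_M[OF \<phi>Dm, of N]] by auto
  define Bt where "Bt \<tau> = {w \<in> space M. (xx \<tau> (\<lambda>i. \<xi> i w), \<xi> \<tau> w) \<in> Bad}" for \<tau>
  have pairm: "(\<lambda>w. (xx \<tau> (\<lambda>i. \<xi> i w), \<xi> \<tau> w)) \<in> measurable M (borel \<Otimes>\<^sub>M S)" if t: "\<tau> \<ge> 1" for \<tau>
    by (rule measurable_Pair[OF PI.it_meas_M xi_meas[rule_format, OF t]])
  have Btm: "Bt \<tau> \<in> sets M" if t: "\<tau> \<ge> 1" for \<tau>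
  proof -
    have "Bt \<tau> = (\<lambda>w. (xx \<tau> (\<lambda>i. \<xi> i w), \<xi> \<tau> w)) -` Bad \<inter> space M" unfolding Bt_def by auto
    thus ?thesis using measurable_sets[OF pairm[OF t] BadS] by simp
  qed
  have E0e: "E0 = (\<Union>\<tau>\<in>{1..N}. Bt \<tau>)" unfolding E0_def Bt_def ..
  have E0m: "E0 \<in> sets M" unfolding E0e using Btm by auto
  have m0: "measure M E0 \<le> 0"
  proof -
    have "measure M E0 \<le> (\<Sum>\<tau>\<in>{1..N}. measure M (Bt \<tau>))"
      unfolding E0e by (rule PM.finite_measure_subadditive_finite) (use Btm in auto)
    also have "\<dots> = 0"
    proof (rule sum.neutral, rule ballI)
      fix \<tau> assume t: "\<tau> \<in> {1..N}"
      have "emeasure M (Bt \<tau>) = 0" unfolding Bt_def using null t by simp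
      thus "measure M (Bt \<tau>) = 0" by (simp add: measure_def)
    qed
    finally show ?thesis .
  qed
  have toreal: "measure M A \<le> e" if "emeasure M A \<le> ennreal e" "e \<ge> 0" for A e
    using that PM.emeasure_eq_measure[of A] by (simp add: ennreal_le_iff)
  have m1: "measure M E1 \<le> exp (- \<Theta>1\<^sup>2 / 4)" by (rule toreal[OF T1]) simp
  have m2: "measure M E2 \<le> exp (- \<Theta>3\<^sup>2 / 4)" by (rule toreal[OF T2]) simp
  have m3: "measure M E3 \<le> exp (- \<Theta>2\<^sup>2 / 4)" by (rule toreal[OF T3]) simp
  have gNm: "gN \<in> borel_measurable M"
  proof -
    have "(\<lambda>w. g (xx \<tau> (\<lambda>i. \<xi> i w)) (\<xi> \<tau> w)) \<in> borel_measurable M" if t: "\<tau> \<in> {1..N}" for \<tau>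
      using measurable_compose[OF pairm g_meas] t by simp
    hence "(\<lambda>w. \<Sum>\<tau>=1..N. g (xx \<tau> (\<lambda>i. \<xi> i w)) (\<xi> \<tau> w)) \<in> borel_measurable M"
      by (rule borel_measurable_sum)
    thus ?thesis unfolding gN_def[abs_def] by measurable
  qed
  have Evm: "Ev \<in> sets M"
  proof -
    define h1 where "h1 w = gN w - b_bound (K1 D \<mu> M2 L) (K2 D \<mu> M1 M2 L) M1 \<Theta>2 N - a_bound M1 \<Theta>3 N" for w
    define h2 where "h2 w = gN w + a_bound M1 \<Theta>1 N" for w
    have h1m: "h1 \<in> borel_measurable M" unfolding h1_def[abs_def] using gNm by measurable
    have h2m: "h2 \<in> borel_measurable M" unfolding h2_def[abs_def] using gNm by measurable
    have "Ev = {w \<in> space M. h1 w \<le> f x_star} \<inter> {w \<in> space M. f x_star \<le> h2 w}"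
      unfolding Ev_def h1_def h2_def by auto
    moreover have "{w \<in> space M. h1 w \<le> f x_star} \<in> sets M" using borel_measurable_iff_le[THEN iffD1, OF h1m] by blast
    moreover have "{w \<in> space M. f x_star \<le> h2 w} \<in> sets M" using borel_measurable_iff_ge[THEN iffD1, OF h2m] by blast
    ultimately show ?thesis by simp
  qed
  have main: "measure M Ev \<ge> 1 - exp (- \<Theta>1\<^sup>2 / 4) - exp (1 - \<Theta>2\<^sup>2) - exp (- \<Theta>2\<^sup>2 / 4) - exp (- \<Theta>3\<^sup>2 / 4)"
  proof (cases "\<Theta>2 \<ge> 1")
    case False
    have "\<Theta>2 * \<Theta>2 < 1 * 1" using Theta(2) False by (intro mult_strict_mono) auto
    hence "\<Theta>2\<^sup>2 < 1" by (simp add: power2_eq_square)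
    hence "exp (1 - \<Theta>2\<^sup>2) > 1" by simp
    moreover have "exp (- \<Theta>1\<^sup>2 / 4) \<ge> 0" "exp (- \<Theta>2\<^sup>2 / 4) \<ge> 0" "exp (- \<Theta>3\<^sup>2 / 4) \<ge> 0" by auto
    moreover have "measure M Ev \<ge> 0" by (rule measure_nonneg)
    ultimately show ?thesis by linarith
  next
    case True
    have sub: "space M - Ev \<subseteq> E0 \<union> E1 \<union> E2 \<union> E3"
    proof
      fix w assume w: "w \<in> space M - Ev"
      show "w \<in> E0 \<union> E1 \<union> E2 \<union> E3"
      proof (rule ccontr)
        assume "w \<notin> E0 \<union> E1 \<union> E2 \<union> E3"
        hence "w \<notin> E0" "w \<notin> E1" "w \<notin> E2" "w \<notin> E3" by auto
        from det[OF True _ this] w show False by auto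
      qed
    qed
    have U2: "E0 \<union> E1 \<in> sets M" by (rule sets.Un[OF E0m E1m])
    have U3: "E0 \<union> E1 \<union> E2 \<in> sets M" by (rule sets.Un[OF U2 E2m])
    have U4: "E0 \<union> E1 \<union> E2 \<union> E3 \<in> sets M" by (rule sets.Un[OF U3 E3m])
    have a1: "measure M (space M - Ev) \<le> measure M (E0 \<union> E1 \<union> E2 \<union> E3)"
      by (rule PM.finite_measure_mono[OF sub U4])
    have a2: "measure M (E0 \<union> E1 \<union> E2 \<union> E3) \<le> measure M (E0 \<union> E1 \<union> E2) + measure M E3"
      by (rule measure_Un_le[OF U3 E3m])
    have a3: "measure M (E0 \<union> E1 \<union> E2) \<le> measure M (E0 \<union> E1) + measure M E2"
      by (rule measure_Un_le[OF U2 E2m])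
    have a4: "measure M (E0 \<union> E1) \<le> measure M E0 + measure M E1"
      by (rule measure_Un_le[OF E0m E1m])
    have cm: "measure M (space M - Ev) = 1 - measure M Ev" by (rule PM.prob_compl[OF Evm])
    have ex: "exp (1 - \<Theta>2\<^sup>2) \<ge> 0" by simp
    show ?thesis using a1 a2 a3 a4 cm ex m0 m1 m2 m3 by linarith
  qed
  show ?thesis
    using main unfolding Let_def Ev_def gN_def xx_def \<gamma>_def D_def .

qed

end
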